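(* Let $\mathbb{F}$ be a field of characteristic zero, $n\ge 1$, $m=2n-1$, and let $\mathfrak{sl}(2)\ltimes \mathfrak{a}_m$ be the Lie algebra in which $\mathfrak{a}_m$ is an abelian ideal isomorphic to $V(m)$ as an $\mathfrak{sl}(2)$-module. Let $V_1=E(a,b)$ with $a+b=m$ and $a,b\neq 0$, with socle decomposition $V_1=V(a)\oplus V(b)$. Let $V_2=V(c)\oplus V(d)$ be the socle decomposition of a uniserial $(\mathfrak{sl}(2)\ltimes\mathfrak{a}_m)$-module of composition length $2$, and put $$S_1(V_1,V_2)=\big(V(a)\otimes V(d)\;\oplus\; V(b)\otimes V(c)\big)^{\mathfrak{a}_m}\subseteq V_1\otimes V_2 .$$ Then: (i) If $V_2\simeq E(c,d)$ with $c+d=m$ and $0<a\le c<m$, then, as $\mathfrak{sl}(2)$-modules, $S_1(V_1,V_2)\simeq V(d-a)$ if $d-a=b-c\ge 0$, and $S_1(V_1,V_2)=0$ otherwise. (ii) If $V_2\simeq Z(c,1)\simeq E(c,c+m)$, then, as $\mathfrak{sl}(2)$-modules, $S_1(V_1,V_2)\simeq V(b)$ if $c=0$, and $S_1(V_1,V_2)=0$ if $c\neq 0$. (iii) If $V_2\simeq Z(d,1)^*\simeq E(d+m,d)$, then $S_1(V_1,V_2)=0$.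
   Context: All Lie algebras and modules are finite dimensional over $\mathbb{F}$ (characteristic zero). $V(k)$ denotes the irreducible $\mathfrak{sl}(2)$-module of highest weight $k$ ($\dim V(k)=k+1$). For a module $U$ over a Lie algebra $\mathfrak{g}$, $\mathrm{soc}(U)$ is the sum of all irreducible submodules; the socle series is $0=\mathrm{soc}^0(U)\subset \mathrm{soc}^1(U)\subset\cdots$ with $\mathrm{soc}^{i}(U)/\mathrm{soc}^{i-1}(U)=\mathrm{soc}(U/\mathrm{soc}^{i-1}(U))$. $U$ is uniserial if it has a unique composition series, i.e. all socle factors are irreducible. For a uniserial $(\mathfrak{sl}(2)\ltimes\mathfrak{a}_m)$-module $U$ of composition length $\ell+1$, a socle decomposition is a decomposition $U=V(a_0)\oplus\cdots\oplus V(a_\ell)$ into irreducible $\mathfrak{sl}(2)$-submodules with $\mathrm{soc}^{i+1}(U)=V(a_0)\oplus\cdots\oplus V(a_i)$ for all $i$ (the order of summands matters). The tensor product carries the action $x(v\otimes w)=xv\otimes w+v\otimes xw$, and $(\cdot)^{\mathfrak{a}_m}$ denotes the subspace annihilated by $\mathfrak{a}_m$. For nonnegative integers $a,b$ with $a+b\equiv m \pmod 2$ and $|a-b|\le m\le a+b$, there is, up to scalar, a unique nonzero $\mathfrak{sl}(2)$-module map $\mathfrak{a}_m\otimes V(b)\to V(a)$; $E(a,b)$ is the $\mathfrak{sl}(2)$-module $V(a)\oplus V(b)$ on which $\mathfrak{a}_m$ acts by killing $V(a)$ and mapping $V(b)$ into $V(a)$ via this map. It is uniserial with socle $V(a)$.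 For integers $\alpha,\ell\ge 0$, $Z(\alpha,\ell)$ is the $\mathfrak{sl}(2)$-module $V(\alpha)\oplus V(\alpha+m)\oplus\cdots\oplus V(\alpha+\ell m)$ where $\mathfrak{a}_m$ kills $V(\alpha)$ and maps each $V(\alpha+im)$ into $V(\alpha+(i-1)m)$ via the nonzero equivariant map above; $Z(\alpha,\ell)^*$ is its dual. In particular $Z(c,1)=E(c,c+m)$ and $Z(d,1)^*\simeq E(d+m,d)$. *)

theory Defs
  imports Main "HOL-Library.Function_Algebras"
begin

text \<open>Generators of sl(2) ltimes a_m: the standard basis E, F, H of sl(2) and the
  basis elements X 0, ..., X m of the abelian ideal a_m, where a_m is identified with
  V(m) as an sl(2)-module (X i corresponds to the i-th standard basis vector of V(m)).\<close>
datatype gen = E | F | H | X nat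

text \<open>Finite-dimensional modules are given concretely by an index set I of basis
  vectors and matrices rho g (column s = image of basis vector s).\<close>
definition act :: "(gen \<Rightarrow> 'i \<Rightarrow> 'i \<Rightarrow> 'k::field) \<Rightarrow> 'i set \<Rightarrow> gen \<Rightarrow> ('i \<Rightarrow> 'k) \<Rightarrow> ('i \<Rightarrow> 'k)" where
  "act rho I g v = (\<lambda>r. \<Sum>s\<in>I. rho g r s * v s)"

definition Vrho :: "nat \<Rightarrow> gen \<Rightarrow> nat \<Rightarrow> nat \<Rightarrow> 'k::field" where
  "Vrho k g r s = (case g of
      E \<Rightarrow> (if s = r + 1 \<and> s \<le> k then of_nat (s * (k - s + 1)) else 0)
    | F \<Rightarrow> (if r = s + 1 \<and> r \<le> k then 1 else 0)
    | H \<Rightarrow> (if r = s \<and> s \<le> k then of_int (int k - 2 * int s) else 0)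
    | X i \<Rightarrow> 0)"

definition Vsp :: "nat \<Rightarrow> (nat \<Rightarrow> 'k::field) set" where
  "Vsp k = {v. \<forall>i. k < i \<longrightarrow> v i = 0}"

text \<open>A bilinear map a_m x V(b) -> V(a) given by coefficients:
  phi(x_i (x) v_j) = sum_k C i j k w_k. It is sl(2)-equivariant if
  phi(g x (x) v) + phi(x (x) g v) = g phi(x (x) v) for g in {E,F,H}.\<close>
definition equivariant :: "nat \<Rightarrow> nat \<Rightarrow> nat \<Rightarrow> (nat \<Rightarrow> nat \<Rightarrow> nat \<Rightarrow> 'k::field) \<Rightarrow> bool" where
  "equivariant m b a C \<longleftrightarrow>
     (\<forall>g\<in>{E, F, H}. \<forall>i\<le>m. \<forall>j\<le>b. \<forall>k\<le>a.
        (\<Sum>i'\<le>m. Vrho m g i' i * C i' j k) + (\<Sum>j'\<le>b. Vrho b g j' j * C i j' k)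
        = (\<Sum>k'\<le>a. Vrho a g k k' * C i j k'))"

definition nonzero_map :: "nat \<Rightarrow> nat \<Rightarrow> nat \<Rightarrow> (nat \<Rightarrow> nat \<Rightarrow> nat \<Rightarrow> 'k::field) \<Rightarrow> bool" where
  "nonzero_map m b a C \<longleftrightarrow> (\<exists>i\<le>m. \<exists>j\<le>b. \<exists>k\<le>a. C i j k \<noteq> 0)"

text \<open>E(a,b): basis Inl 0..Inl a (the socle V(a)) and Inr 0..Inr b (the top V(b));
  a_m kills V(a) and maps V(b) to V(a) via C.\<close>
definition EI :: "nat \<Rightarrow> nat \<Rightarrow> (nat + nat) set" where
  "EI a b = Inl ` {..a} \<union> Inr ` {..b}"

definition Erho :: "nat \<Rightarrow> nat \<Rightarrow> (nat \<Rightarrow> nat \<Rightarrow> nat \<Rightarrow> 'k::field)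
      \<Rightarrow> gen \<Rightarrow> nat + nat \<Rightarrow> nat + nat \<Rightarrow> 'k" where
  "Erho a b C g r s = (if r \<in> EI a b \<and> s \<in> EI a b then
     (case g of
        X i \<Rightarrow> (case (r, s) of (Inl k, Inr j) \<Rightarrow> C i j k | _ \<Rightarrow> 0)
      | _ \<Rightarrow> (case (r, s) of (Inl k, Inl k') \<Rightarrow> Vrho a g k k'
                         | (Inr j, Inr j') \<Rightarrow> Vrho b g j j'
                         | _ \<Rightarrow> 0))
     else 0)"

definition trho :: "(gen \<Rightarrow> 'i \<Rightarrow> 'i \<Rightarrow> 'k::field) \<Rightarrow> (gen \<Rightarrow> 'j \<Rightarrow> 'j \<Rightarrow> 'k)
      \<Rightarrow> gen \<Rightarrow> 'i \<times> 'j \<Rightarrow> 'i \<times> 'j \<Rightarrow> 'k" where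
  "trho rho1 rho2 g r s =
     rho1 g (fst r) (fst s) * (if snd r = snd s then 1 else 0)
     + (if fst r = fst s then 1 else 0) * rho2 g (snd r) (snd s)"

definition S1 :: "nat \<Rightarrow> nat \<Rightarrow> nat \<Rightarrow> (nat \<Rightarrow> nat \<Rightarrow> nat \<Rightarrow> 'k::field)
      \<Rightarrow> nat \<Rightarrow> nat \<Rightarrow> (nat \<Rightarrow> nat \<Rightarrow> nat \<Rightarrow> 'k) \<Rightarrow> ((nat + nat) \<times> (nat + nat) \<Rightarrow> 'k) set" where
  "S1 m a b C1 c d C2 =
     {u. (\<forall>p. p \<notin> (Inl ` {..a} \<times> Inr ` {..d}) \<union> (Inr ` {..b} \<times> Inl ` {..c}) \<longrightarrow> u p = 0)
       \<and> (\<forall>i\<le>m. act (trho (Erho a b C1) (Erho c d C2)) (EI a b \<times> EI c d) (X i) u = 0)}"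

definition sl2_iso_V :: "(gen \<Rightarrow> 'i \<Rightarrow> 'i \<Rightarrow> 'k::field) \<Rightarrow> 'i set \<Rightarrow> ('i \<Rightarrow> 'k) set \<Rightarrow> nat \<Rightarrow> bool" where
  "sl2_iso_V rho I S k \<longleftrightarrow>
     (\<forall>g\<in>{E, F, H}. \<forall>u\<in>S. act rho I g u \<in> S) \<and>
     (\<exists>\<phi> :: ('i \<Rightarrow> 'k) \<Rightarrow> (nat \<Rightarrow> 'k).
        (\<forall>u\<in>S. \<forall>v\<in>S. \<phi> (u + v) = \<phi> u + \<phi> v) \<and>
        (\<forall>t. \<forall>u\<in>S. \<phi> (\<lambda>p. t * u p) = (\<lambda>p. t * \<phi> u p)) \<and>
        bij_betw \<phi> S (Vsp k) \<and>
        (\<forall>g\<in>{E, F, H}. \<forall>u\<in>S. \<phi> (act rho I g u) = act (Vrho k) {..k} g (\<phi> u)))"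

end

theory Submission
  imports Defs
begin

definition wvec :: "('i \<Rightarrow> int) \<Rightarrow> int \<Rightarrow> ('i \<Rightarrow> 'k::zero) \<Rightarrow> bool" where
  "wvec wt w u \<longleftrightarrow> (\<forall>r. u r \<noteq> 0 \<longrightarrow> wt r = w)"

definition proj :: "('i \<Rightarrow> int) \<Rightarrow> int \<Rightarrow> ('i \<Rightarrow> 'k::zero) \<Rightarrow> 'i \<Rightarrow> 'k" where
  "proj wt w u = (\<lambda>r. if wt r = w then u r else 0)"

lemma wvec_two:
  assumes "wvec wt w u" "wvec wt w' u" "u \<noteq> (\<lambda>_. 0)"
  shows "w = w'"
proof -
  from assms(3) obtain r where "u r \<noteq> 0" by auto
  with assms(1,2) show ?thesis unfolding wvec_def by metis
qed

lemma wvec_sc: "wvec wt w u \<Longrightarrow> wvec wt w (\<lambda>r. (t::'k::field) * u r)"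
  unfolding wvec_def by auto

lemma wvec_proj: "wvec wt w (proj wt w u)"
  unfolding wvec_def proj_def by auto

locale sl2_base =
  fixes S :: "('i \<Rightarrow> 'k::field_char_0) set" and Eo Fo :: "('i \<Rightarrow> 'k) \<Rightarrow> 'i \<Rightarrow> 'k"
    and wt :: "'i \<Rightarrow> int" and I :: "'i set"
  assumes finI: "finite I"
    and supp: "u \<in> S \<Longrightarrow> r \<notin> I \<Longrightarrow> u r = 0"
    and S0: "(\<lambda>_. 0) \<in> S"
    and Sadd: "u \<in> S \<Longrightarrow> v \<in> S \<Longrightarrow> (\<lambda>r. u r + v r) \<in> S"
    and Ssc: "u \<in> S \<Longrightarrow> (\<lambda>r. t * u r) \<in> S"
    and Estab: "u \<in> S \<Longrightarrow> Eo u \<in> S"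
    and Fstab: "u \<in> S \<Longrightarrow> Fo u \<in> S"
    and Eadd: "u \<in> S \<Longrightarrow> v \<in> S \<Longrightarrow> Eo (\<lambda>r. u r + v r) = (\<lambda>r. Eo u r + Eo v r)"
    and Esc: "u \<in> S \<Longrightarrow> Eo (\<lambda>r. t * u r) = (\<lambda>r. t * Eo u r)"
    and Fadd: "u \<in> S \<Longrightarrow> v \<in> S \<Longrightarrow> Fo (\<lambda>r. u r + v r) = (\<lambda>r. Fo u r + Fo v r)"
    and Fsc: "u \<in> S \<Longrightarrow> Fo (\<lambda>r. t * u r) = (\<lambda>r. t * Fo u r)"
    and Ewt: "u \<in> S \<Longrightarrow> wvec wt w u \<Longrightarrow> wvec wt (w + 2) (Eo u)"
    and Fwt: "u \<in> S \<Longrightarrow> wvec wt w u \<Longrightarrow> wvec wt (w - 2) (Fo u)"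
    and comm: "u \<in> S \<Longrightarrow> wvec wt w u \<Longrightarrow> Eo (Fo u) r = Fo (Eo u) r + of_int w * u r"
    and projS: "u \<in> S \<Longrightarrow> proj wt w u \<in> S"
begin

lemma E0: "Eo (\<lambda>_. 0) = (\<lambda>_. 0)"
  using Esc[OF S0, of 0] by simp

lemma F0: "Fo (\<lambda>_. 0) = (\<lambda>_. 0)"
  using Fsc[OF S0, of 0] by simp

lemma Fpow_S: "u \<in> S \<Longrightarrow> (Fo ^^ n) u \<in> S"
  by (induction n) (auto intro: Fstab)

lemma Fpow_wt: "u \<in> S \<Longrightarrow> wvec wt w u \<Longrightarrow> wvec wt (w - 2 * int n) ((Fo ^^ n) u)"
proof (induction n)
  case 0 then show ?case by simp
next
  case (Suc n)
  have "wvec wt (w - 2 * int n - 2) (Fo ((Fo ^^ n) u))"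
    using Fwt[OF Fpow_S[OF Suc.prems(1)] Suc.IH[OF Suc.prems]] .
  then show ?case by (simp add: algebra_simps)
qed

lemma Ssum: "finite A \<Longrightarrow> (\<forall>x\<in>A. f x \<in> S) \<Longrightarrow> (\<lambda>r. \<Sum>x\<in>A. c x * f x r) \<in> S"
proof (induction A rule: finite_induct)
  case empty then show ?case using S0 by simp
next
  case (insert a A)
  have "(\<lambda>r. c a * f a r + (\<Sum>x\<in>A. c x * f x r)) \<in> S"
    using Sadd[OF Ssc[of "f a" "c a"] insert.IH] insert.prems by auto
  then show ?case using insert.hyps by simp
qed

lemma Esum: "finite A \<Longrightarrow> (\<forall>x\<in>A. f x \<in> S) \<Longrightarrow>
   Eo (\<lambda>r. \<Sum>x\<in>A. c x * f x r) = (\<lambda>r. \<Sum>x\<in>A. c x * Eo (f x) r)"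
proof (induction A rule: finite_induct)
  case empty then show ?case using E0 by simp
next
  case (insert a A)
  have S1: "(\<lambda>r. c a * f a r) \<in> S" using Ssc insert.prems by auto
  have S2: "(\<lambda>r. \<Sum>x\<in>A. c x * f x r) \<in> S" using Ssum insert by auto
  have "Eo (\<lambda>r. c a * f a r + (\<Sum>x\<in>A. c x * f x r)) =
        (\<lambda>r. Eo (\<lambda>r. c a * f a r) r + Eo (\<lambda>r. \<Sum>x\<in>A. c x * f x r) r)"
    using Eadd[OF S1 S2] by simp
  also have "\<dots> = (\<lambda>r. c a * Eo (f a) r + (\<Sum>x\<in>A. c x * Eo (f x) r))"
    using Esc[of "f a" "c a"] insert by auto
  finally show ?case using insert.hyps by simp
qed

lemma Fsum: "finite A \<Longrightarrow> (\<forall>x\<in>A. f x \<in> S) \<Longrightarrow>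
   Fo (\<lambda>r. \<Sum>x\<in>A. c x * f x r) = (\<lambda>r. \<Sum>x\<in>A. c x * Fo (f x) r)"
proof (induction A rule: finite_induct)
  case empty then show ?case using F0 by simp
next
  case (insert a A)
  have S1: "(\<lambda>r. c a * f a r) \<in> S" using Ssc insert.prems by auto
  have S2: "(\<lambda>r. \<Sum>x\<in>A. c x * f x r) \<in> S" using Ssum insert by auto
  have "Fo (\<lambda>r. c a * f a r + (\<Sum>x\<in>A. c x * f x r)) =
        (\<lambda>r. Fo (\<lambda>r. c a * f a r) r + Fo (\<lambda>r. \<Sum>x\<in>A. c x * f x r) r)"
    using Fadd[OF S1 S2] by simp
  also have "\<dots> = (\<lambda>r. c a * Fo (f a) r + (\<Sum>x\<in>A. c x * Fo (f x) r))"
    using Fsc[of "f a" "c a"] insert by auto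
  finally show ?case using insert.hyps by simp
qed

lemma Fdiff: "u \<in> S \<Longrightarrow> v \<in> S \<Longrightarrow> Fo (\<lambda>r. u r - v r) = (\<lambda>r. Fo u r - Fo v r)"
proof -
  assume u: "u \<in> S" and v: "v \<in> S"
  have eq: "(\<lambda>r. u r - v r) = (\<lambda>r. u r + (-1) * v r)" by simp
  have "Fo (\<lambda>r. u r + (-1) * v r) = (\<lambda>r. Fo u r + Fo (\<lambda>r. (-1) * v r) r)"
    by (rule Fadd[OF u Ssc[OF v]])
  also have "\<dots> = (\<lambda>r. Fo u r - Fo v r)" using Fsc[OF v, of "-1"] by simp
  finally show ?thesis unfolding eq .
qed

lemma wvec_zero_outside:
  assumes "u \<in> S" "wvec wt w u" "\<forall>r\<in>I. wt r \<noteq> w"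
  shows "u = (\<lambda>_. 0)"
proof
  fix r
  show "u r = 0"
  proof (cases "r \<in> I")
    case True then show ?thesis using assms unfolding wvec_def by auto
  next
    case False then show ?thesis using supp assms(1) by auto
  qed
qed

lemma lower_bound: "\<exists>L. \<forall>r\<in>I. L \<le> wt r"
proof -
  have "\<forall>r\<in>I. - (\<Sum>x\<in>I. \<bar>wt x\<bar>) \<le> wt r"
  proof
    fix r assume "r \<in> I"
    then have "\<bar>wt r\<bar> \<le> (\<Sum>x\<in>I. \<bar>wt x\<bar>)"
      using member_le_sum[of r I "\<lambda>x. \<bar>wt x\<bar>"] finI by auto
    then show "- (\<Sum>x\<in>I. \<bar>wt x\<bar>) \<le> wt r" by linarith
  qed
  then show ?thesis by blast
qed

lemma nil: assumes "u \<in> S" "wvec wt w u" shows "\<exists>n. (Fo ^^ n) u = (\<lambda>_. 0)"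
proof -
  obtain L where L: "\<forall>r\<in>I. L \<le> wt r" using lower_bound by blast
  define n where "n = nat (w - L) + 1"
  have "int (nat (w - L)) \<ge> w - L" by simp
  moreover have "int n = int (nat (w - L)) + 1" by (simp add: n_def)
  ultimately have "w - 2 * int n < L" by linarith
  then have "\<forall>r\<in>I. wt r \<noteq> w - 2 * int n" using L by force
  then have "(Fo ^^ n) u = (\<lambda>_. 0)"
    using wvec_zero_outside[OF Fpow_S[OF assms(1)] Fpow_wt[OF assms]] by blast
  then show ?thesis by blast
qed

lemma decomp: assumes "u \<in> S" shows "u = (\<lambda>r. \<Sum>w\<in>wt ` I. proj wt w u r)"
proof
  fix r
  show "u r = (\<Sum>w\<in>wt ` I. proj wt w u r)"
  proof (cases "r \<in> I")
    case True
    have "(\<Sum>w\<in>wt ` I. proj wt w u r) = (\<Sum>w\<in>wt ` I. if w = wt r then u r else 0)"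
      unfolding proj_def by (rule sum.cong) auto
    also have "\<dots> = u r" using True finI by (simp add: sum.delta')
    finally show ?thesis by simp
  next
    case False
    have ur: "u r = 0" using supp[OF assms False] .
    show ?thesis unfolding proj_def ur by (rule sym, rule sum.neutral) simp
  qed
qed

lemma zero_thm:
  assumes kerF0: "\<forall>u\<in>S. Fo u = (\<lambda>_. 0) \<longrightarrow> u = (\<lambda>_. 0)"
    and u: "u \<in> S"
  shows "u = (\<lambda>_. 0)"
proof -
  have wv: "v = (\<lambda>_. 0)" if "v \<in> S" "(Fo ^^ n) v = (\<lambda>_. 0)" for n v
    using that
  proof (induction n arbitrary: v)
    case 0 then show ?case by simp
  next
    case (Suc n)
    have "(Fo ^^ n) (Fo v) = (\<lambda>_. 0)" using Suc.prems(2) by (simp add: funpow_Suc_right del: funpow.simps)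
    then have "Fo v = (\<lambda>_. 0)" using Suc.IH Fstab Suc.prems(1) by blast
    then show ?case using kerF0 Suc.prems(1) by blast
  qed
  have "\<forall>w. proj wt w u = (\<lambda>_. 0)"
  proof
    fix w
    obtain n where "(Fo ^^ n) (proj wt w u) = (\<lambda>_. 0)" using nil[OF projS[OF u] wvec_proj] by blast
    then show "proj wt w u = (\<lambda>_. 0)" using wv projS[OF u] by blast
  qed
  then show ?thesis using decomp[OF u] by simp
qed

end


locale sl2_lw = sl2_base S Eo Fo wt I
  for S :: "('i \<Rightarrow> 'k::field_char_0) set" and Eo Fo wt I +
  fixes e :: nat and z :: "'i \<Rightarrow> 'k"
  assumes zS: "z \<in> S" and znz: "z \<noteq> (\<lambda>_. 0)" and zwt: "wvec wt (- int e) z"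
    and Fz: "Fo z = (\<lambda>_. 0)"
    and kerF: "u \<in> S \<Longrightarrow> Fo u = (\<lambda>_. 0) \<Longrightarrow> \<exists>t. u = (\<lambda>r. t * z r)"
begin

definition y :: "nat \<Rightarrow> 'i \<Rightarrow> 'k" where "y s = (Eo ^^ s) z"

lemma y0: "y 0 = z" by (simp add: y_def)
lemma ySuc: "y (Suc s) = Eo (y s)" by (simp add: y_def)

lemma yS: "y s \<in> S"
  by (induction s) (auto simp: y0 ySuc zS intro: Estab)

lemma ywt: "wvec wt (2 * int s - int e) (y s)"
proof (induction s)
  case 0 then show ?case using zwt by (simp add: y0)
next
  case (Suc s)
  have "wvec wt (2 * int s - int e + 2) (Eo (y s))" using Ewt[OF yS Suc.IH] .
  then show ?case by (simp add: ySuc algebra_simps)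
qed

lemma Fy: "Fo (y (Suc s)) = (\<lambda>r. of_int (int (Suc s) * (int e - int s)) * y s r)"
proof (induction s)
  case 0
  show ?case
  proof
    fix r
    have "Eo (Fo z) r = Fo (Eo z) r + of_int (- int e) * z r" using comm[OF zS zwt] .
    then show "Fo (y (Suc 0)) r = of_int (int (Suc 0) * (int e - int 0)) * y 0 r"
      using E0 Fz by (simp add: y0 ySuc)
  qed
next
  case (Suc s)
  show ?case
  proof
    fix r
    define c :: 'k where "c = of_int (int (Suc s) * (int e - int s))"
    define w :: 'k where "w = of_int (2 * int (Suc s) - int e)"
    have e1: "Eo (Fo (y (Suc s))) r = Fo (Eo (y (Suc s))) r + w * y (Suc s) r"
      unfolding w_def using comm[OF yS ywt] .
    have "Eo (Fo (y (Suc s))) = (\<lambda>r. c * Eo (y s) r)"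
      unfolding c_def by (simp only: Suc.IH Esc[OF yS])
    then have e2: "Eo (Fo (y (Suc s))) r = c * y (Suc s) r" by (simp add: ySuc)
    have "Fo (y (Suc (Suc s))) r = Fo (Eo (y (Suc s))) r" by (simp only: ySuc[of "Suc s"])
    also have "\<dots> = c * y (Suc s) r - w * y (Suc s) r" using e1 e2 by (simp add: eq_diff_eq)
    also have "\<dots> = (c - w) * y (Suc s) r" by (simp add: left_diff_distrib)
    also have "c - w = of_int (int (Suc (Suc s)) * (int e - int (Suc s)))"
    proof -
      have "int (Suc s) * (int e - int s) - (2 * int (Suc s) - int e) = int (Suc (Suc s)) * (int e - int (Suc s))"
        by (simp add: algebra_simps)
      then show ?thesis unfolding c_def w_def by (metis of_int_diff)
    qed
    finally show "Fo (y (Suc (Suc s))) r = of_int (int (Suc (Suc s)) * (int e - int (Suc s))) * y (Suc s) r" .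
  qed
qed

lemma Fy': "Fo (y s) = (\<lambda>r. of_int (int s * (int e - int s + 1)) * y (s - 1) r)"
proof (cases s)
  case 0 then show ?thesis using Fz by (simp add: y0)
next
  case (Suc s') then show ?thesis using Fy[of s'] by (simp add: algebra_simps)
qed

lemma sc_zero: "(\<lambda>r. (t::'k) * v r) = (\<lambda>_. 0) \<Longrightarrow> t \<noteq> 0 \<Longrightarrow> v = (\<lambda>_. 0)"
  by (metis mult_eq_0_iff)

lemma y_nz: "s \<le> e \<Longrightarrow> y s \<noteq> (\<lambda>_. 0)"
proof (induction s)
  case 0 then show ?case using znz by (simp add: y0)
next
  case (Suc s)
  show ?case
  proof
    assume h: "y (Suc s) = (\<lambda>_. 0)"
    then have "Fo (y (Suc s)) = (\<lambda>_. 0)" using F0 by simp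
    then have "(\<lambda>r. of_int (int (Suc s) * (int e - int s)) * y s r) = (\<lambda>_. 0)" using Fy by simp
    moreover have "(of_int (int (Suc s) * (int e - int s)) :: 'k) \<noteq> 0"
    proof -
      have "int (Suc s) * (int e - int s) \<noteq> 0" using Suc.prems by simp
      then show ?thesis by (metis of_int_eq_0_iff)
    qed
    ultimately have "y s = (\<lambda>_. 0)" by (rule sc_zero)
    then show False using Suc by simp
  qed
qed

lemma wvec_z_sc: "wvec wt (- int e) (\<lambda>r. t * z r)"
  using zwt unfolding wvec_def by auto

lemma y_top: "y (Suc e) = (\<lambda>_. 0)"
proof (rule ccontr)
  assume nz: "y (Suc e) \<noteq> (\<lambda>_. 0)"
  have "Fo (y (Suc e)) = (\<lambda>_. 0)" using Fy[of e] by simp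
  then obtain t where t: "y (Suc e) = (\<lambda>r. t * z r)" using kerF yS by blast
  have "wvec wt (2 * int (Suc e) - int e) (y (Suc e))" by (rule ywt)
  moreover have "wvec wt (- int e) (y (Suc e))" using t wvec_z_sc by simp
  ultimately have "2 * int (Suc e) - int e = - int e" using wvec_two nz by blast
  then show False by simp
qed

lemma y_big: "e < s \<Longrightarrow> y s = (\<lambda>_. 0)"
proof (induction s)
  case 0 then show ?case by simp
next
  case (Suc s)
  show ?case
  proof (cases "s = e")
    case True then show ?thesis using y_top by simp
  next
    case False then have "e < s" using Suc.prems by simp
    then show ?thesis using Suc.IH E0 by (simp add: ySuc)
  qed
qed

lemma hw: assumes u: "u \<in> S" and Eu: "Eo u = (\<lambda>_. 0)" and wu: "wvec wt w u"
  shows "Eo ((Fo ^^ Suc j) u) = (\<lambda>r. of_int (int (Suc j) * (w - int j)) * (Fo ^^ j) u r)"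
proof (induction j)
  case 0
  show ?case
  proof
    fix r
    have "Eo (Fo u) r = Fo (Eo u) r + of_int w * u r" using comm[OF u wu] .
    then show "Eo ((Fo ^^ Suc 0) u) r = of_int (int (Suc 0) * (w - int 0)) * (Fo ^^ 0) u r"
      using Eu F0 by simp
  qed
next
  case (Suc j)
  show ?case
  proof
    fix r
    have S': "(Fo ^^ Suc j) u \<in> S" using Fpow_S u by blast
    have W': "wvec wt (w - 2 * int (Suc j)) ((Fo ^^ Suc j) u)" using Fpow_wt u wu by blast
    define c :: 'k where "c = of_int (int (Suc j) * (w - int j))"
    define w' :: 'k where "w' = of_int (w - 2 * int (Suc j))"
    define Y where "Y = (Fo ^^ Suc j) u"
    have e1: "Eo (Fo Y) r = Fo (Eo Y) r + w' * Y r"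
      unfolding w'_def Y_def using comm[OF S' W'] .
    have "Fo (Eo Y) = (\<lambda>r. c * Fo ((Fo ^^ j) u) r)"
      unfolding c_def Y_def by (simp only: Suc.IH Fsc[OF Fpow_S[OF u]])
    then have e2: "Fo (Eo Y) r = c * Y r" by (simp add: Y_def)
    have "Eo ((Fo ^^ Suc (Suc j)) u) r = Eo (Fo Y) r" by (simp add: Y_def)
    also have "\<dots> = c * Y r + w' * Y r" using e1 e2 by simp
    also have "\<dots> = (c + w') * Y r" by (simp add: distrib_right)
    also have "c + w' = of_int (int (Suc (Suc j)) * (w - int (Suc j)))"
    proof -
      have "int (Suc j) * (w - int j) + (w - 2 * int (Suc j)) = int (Suc (Suc j)) * (w - int (Suc j))"
        by (simp add: algebra_simps)
      then show ?thesis unfolding c_def w'_def by (metis of_int_add)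
    qed
    finally show "Eo ((Fo ^^ Suc (Suc j)) u) r = of_int (int (Suc (Suc j)) * (w - int (Suc j))) * (Fo ^^ Suc j) u r"
      by (simp add: Y_def)
  qed
qed

lemma nonzero_wt_in: "u \<in> S \<Longrightarrow> wvec wt w u \<Longrightarrow> u \<noteq> (\<lambda>_. 0) \<Longrightarrow> w \<in> wt ` I"
proof -
  assume u: "u \<in> S" and w: "wvec wt w u" and nz: "u \<noteq> (\<lambda>_. 0)"
  then obtain r where r: "u r \<noteq> 0" by auto
  then have "r \<in> I" using supp[OF u] by blast
  moreover have "wt r = w" using w r unfolding wvec_def by auto
  ultimately show ?thesis by blast
qed

lemma nohigh: assumes u: "u \<in> S" and wu: "wvec wt w u" and we: "int e < w"
  shows "u = (\<lambda>_. 0)"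
proof (rule ccontr)
  assume nz: "u \<noteq> (\<lambda>_. 0)"
  define W where "W = {w. int e < w \<and> (\<exists>u\<in>S. wvec wt w u \<and> u \<noteq> (\<lambda>_. 0))}"
  have WI: "W \<subseteq> wt ` I" unfolding W_def using nonzero_wt_in by blast
  have finW: "finite W" using finite_subset[OF WI] finI by blast
  have "w \<in> W" unfolding W_def using u wu we nz by blast
  then have neW: "W \<noteq> {}" by blast
  define ws where "ws = Max W"
  have "ws \<in> W" unfolding ws_def using finW neW by simp
  then obtain us where us: "us \<in> S" "wvec wt ws us" "us \<noteq> (\<lambda>_. 0)" and wse: "int e < ws"
    unfolding W_def by blast
  have Eus: "Eo us = (\<lambda>_. 0)"
  proof (rule ccontr)
    assume "Eo us \<noteq> (\<lambda>_. 0)"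
    then have "ws + 2 \<in> W" unfolding W_def using Estab[OF us(1)] Ewt[OF us(1,2)] wse by auto
    then have "ws + 2 \<le> ws" unfolding ws_def using Max_ge[OF finW] by blast
    then show False by simp
  qed
  obtain n where n: "(Fo ^^ n) us = (\<lambda>_. 0)" using nil[OF us(1,2)] by blast
  define J where "J = (LEAST n. (Fo ^^ n) us = (\<lambda>_. 0))"
  have J: "(Fo ^^ J) us = (\<lambda>_. 0)" unfolding J_def using n by (rule LeastI)
  have "J \<noteq> 0" using J us(3) by auto
  then obtain j where j: "J = Suc j" by (cases J) auto
  have nzj: "(Fo ^^ j) us \<noteq> (\<lambda>_. 0)"
    using not_less_Least[of j "\<lambda>n. (Fo ^^ n) us = (\<lambda>_. 0)"] j unfolding J_def by auto
  have "(\<lambda>r. of_int (int (Suc j) * (ws - int j)) * (Fo ^^ j) us r) = (\<lambda>_. 0)"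
    using hw[OF us(1) Eus us(2), of j] J j E0 by simp
  then have "(of_int (int (Suc j) * (ws - int j)) :: 'k) = 0" using sc_zero nzj by blast
  then have "int (Suc j) * (ws - int j) = 0" by (metis of_int_eq_0_iff)
  then have wsj: "ws = int j" by simp
  have vS: "(Fo ^^ j) us \<in> S" using Fpow_S us(1) by blast
  have "Fo ((Fo ^^ j) us) = (\<lambda>_. 0)" using J j by simp
  then obtain t where t: "(Fo ^^ j) us = (\<lambda>r. t * z r)" using kerF[OF vS] by blast
  have "wvec wt (ws - 2 * int j) ((Fo ^^ j) us)" using Fpow_wt us by blast
  moreover have "wvec wt (- int e) ((Fo ^^ j) us)" using t wvec_z_sc by simp
  ultimately have "ws - 2 * int j = - int e" using wvec_two nzj by blast
  then show False using wsj wse by simp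
qed

end


context sl2_lw begin
definition Ysp :: "('i \<Rightarrow> 'k) set" where
  "Ysp = {v. \<exists>c. v = (\<lambda>r. \<Sum>s\<le>e. c s * y s r)}"

lemma Ysp_0: "(\<lambda>_. 0) \<in> Ysp"
  unfolding Ysp_def by (rule CollectI, rule exI[of _ "\<lambda>_. 0"]) simp

lemma Ysp_add: "u \<in> Ysp \<Longrightarrow> v \<in> Ysp \<Longrightarrow> (\<lambda>r. u r + v r) \<in> Ysp"
proof -
  assume "u \<in> Ysp" "v \<in> Ysp"
  then obtain c c' where "u = (\<lambda>r. \<Sum>s\<le>e. c s * y s r)" "v = (\<lambda>r. \<Sum>s\<le>e. c' s * y s r)"
    unfolding Ysp_def by blast
  then have eq: "(\<lambda>r. u r + v r) = (\<lambda>r. \<Sum>s\<le>e. (c s + c' s) * y s r)"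
    by (simp add: sum.distrib algebra_simps)
  show ?thesis unfolding Ysp_def mem_Collect_eq by (rule exI[where x="\<lambda>s. c s + c' s"], rule eq)
qed

lemma Ysp_sc: "u \<in> Ysp \<Longrightarrow> (\<lambda>r. t * u r) \<in> Ysp"
proof -
  assume "u \<in> Ysp"
  then obtain c where "u = (\<lambda>r. \<Sum>s\<le>e. c s * y s r)" unfolding Ysp_def by blast
  then have eq: "(\<lambda>r. t * u r) = (\<lambda>r. \<Sum>s\<le>e. (t * c s) * y s r)"
    by (simp add: sum_distrib_left algebra_simps)
  show ?thesis unfolding Ysp_def mem_Collect_eq by (rule exI[where x="\<lambda>s. t * c s"], rule eq)
qed

lemma Ysp_y: "y s \<in> Ysp"
proof (cases "s \<le> e")
  case True
  have eq: "y s = (\<lambda>r. \<Sum>s'\<le>e. (if s' = s then 1 else 0) * y s' r)"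
  proof
    fix r
    have "(\<Sum>s'\<le>e. (if s' = s then 1 else 0) * y s' r) = (\<Sum>s'\<le>e. if s' = s then y s r else 0)"
      by (rule sum.cong) auto
    then show "y s r = (\<Sum>s'\<le>e. (if s' = s then 1 else 0) * y s' r)" using True by simp
  qed
  show ?thesis unfolding Ysp_def mem_Collect_eq by (rule exI[where x="\<lambda>s'. if s' = s then 1 else 0"], rule eq)
next
  case False then show ?thesis using y_big Ysp_0 by simp
qed

lemma Ysp_sum: "finite A \<Longrightarrow> (\<forall>x\<in>A. f x \<in> Ysp) \<Longrightarrow> (\<lambda>r. \<Sum>x\<in>A. f x r) \<in> Ysp"
proof (induction A rule: finite_induct)
  case empty then show ?case using Ysp_0 by simp
next
  case (insert a A)
  then show ?case using Ysp_add[of "f a" "\<lambda>r. \<Sum>x\<in>A. f x r"] by simp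
qed

lemma Ysp_S: "u \<in> Ysp \<Longrightarrow> u \<in> S"
  unfolding Ysp_def using Ssum yS by blast

end


context sl2_lw begin
definition rs :: "nat \<Rightarrow> 'i" where "rs s = (SOME r. y s r \<noteq> 0)"

lemma rs_nz: "s \<le> e \<Longrightarrow> y s (rs s) \<noteq> 0"
proof -
  assume "s \<le> e"
  then have "\<exists>r. y s r \<noteq> 0" using y_nz by auto
  then show ?thesis unfolding rs_def by (rule someI_ex)
qed

lemma rs_wt: "s \<le> e \<Longrightarrow> wt (rs s) = 2 * int s - int e"
  using rs_nz ywt unfolding wvec_def by blast

lemma y_rs: "s \<le> e \<Longrightarrow> s' \<noteq> s \<Longrightarrow> y s' (rs s) = 0"
proof (rule ccontr)
  assume s: "s \<le> e" "s' \<noteq> s" and nz: "y s' (rs s) \<noteq> 0"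
  then have "wt (rs s) = 2 * int s' - int e" using ywt unfolding wvec_def by blast
  then show False using rs_wt[OF s(1)] s(2) by simp
qed

lemma eval_rs: "s \<le> e \<Longrightarrow> (\<Sum>s'\<le>e. c s' * y s' (rs s)) = c s * y s (rs s)"
proof -
  assume s: "s \<le> e"
  have "(\<Sum>s'\<le>e. c s' * y s' (rs s)) = (\<Sum>s'\<le>e. if s' = s then c s * y s (rs s) else 0)"
    by (rule sum.cong) (auto simp: y_rs[OF s])
  also have "\<dots> = c s * y s (rs s)" using s by simp
  finally show ?thesis .
qed

definition coef :: "('i \<Rightarrow> 'k) \<Rightarrow> nat \<Rightarrow> 'k" where
  "coef u s = u (rs s) / y s (rs s)"

lemma coef_repr: "s \<le> e \<Longrightarrow> coef (\<lambda>r. \<Sum>s'\<le>e. c s' * y s' r) s = c s"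
  unfolding coef_def using eval_rs rs_nz by simp

end


context sl2_lw begin
lemma wv_in_Ysp: "u \<in> S \<Longrightarrow> wvec wt w u \<Longrightarrow> (Fo ^^ n) u = (\<lambda>_. 0) \<Longrightarrow> u \<in> Ysp"
proof (induction n arbitrary: u w)
  case 0 then show ?case using Ysp_0 by simp
next
  case (Suc n)
  have uS: "u \<in> S" and wu: "wvec wt w u" using Suc.prems by auto
  have FuS: "Fo u \<in> S" using Fstab uS by blast
  have wFu: "wvec wt (w - 2) (Fo u)" using Fwt uS wu by blast
  have "(Fo ^^ n) (Fo u) = (\<lambda>_. 0)" using Suc.prems(3) by (simp add: funpow_Suc_right del: funpow.simps)
  then have "Fo u \<in> Ysp" using Suc.IH FuS wFu by blast
  then obtain c where c: "Fo u = (\<lambda>r. \<Sum>s\<le>e. c s * y s r)" unfolding Ysp_def by blast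
  have c0: "c s = 0" if "s \<le> e" "2 * int s - int e \<noteq> w - 2" for s
  proof -
    have "Fo u (rs s) = 0" using wFu rs_wt[OF that(1)] that(2) unfolding wvec_def by auto
    then have "c s * y s (rs s) = 0" using c eval_rs[OF that(1)] by simp
    then show ?thesis using rs_nz[OF that(1)] by simp
  qed
  have zero_or: "u \<in> Ysp" if Fu0: "Fo u = (\<lambda>_. 0)"
  proof -
    obtain t where "u = (\<lambda>r. t * z r)" using kerF uS Fu0 by blast
    then show ?thesis using Ysp_sc[OF Ysp_y[of 0]] by (simp add: y0)
  qed
  show ?case
  proof (cases "\<exists>s0\<le>e. 2 * int s0 - int e = w - 2")
    case False
    then have "\<forall>s\<le>e. c s = 0" using c0 by blast
    then have "Fo u = (\<lambda>_. 0)" using c by simp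
    then show ?thesis using zero_or by blast
  next
    case True
    then obtain s0 where s0: "s0 \<le> e" "2 * int s0 - int e = w - 2" by blast
    have cz: "c s = 0" if "s \<le> e" "s \<noteq> s0" for s
      using c0[OF that(1)] s0(2) that(2) by simp
    have Fu: "Fo u = (\<lambda>r. c s0 * y s0 r)"
    proof
      fix r
      have "(\<Sum>s\<le>e. c s * y s r) = (\<Sum>s\<le>e. if s = s0 then c s0 * y s0 r else 0)"
        by (rule sum.cong) (auto simp: cz)
      then show "Fo u r = c s0 * y s0 r" using c s0 by simp
    qed
    show ?thesis
    proof (cases "s0 = e")
      case True
      then have "int e < w" using s0 by simp
      then have "u = (\<lambda>_. 0)" using nohigh uS wu by blast
      then show ?thesis using Ysp_0 by simp
    next
      case False
      then have s0e: "s0 < e" using s0 by simp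
      define k :: 'k where "k = of_int (int (Suc s0) * (int e - int s0))"
      have k0: "k \<noteq> 0"
      proof -
        have "int (Suc s0) * (int e - int s0) \<noteq> 0" using s0e by simp
        then show ?thesis unfolding k_def by (metis of_int_eq_0_iff)
      qed
      define v where "v = (\<lambda>r. (c s0 / k) * y (Suc s0) r)"
      have vS: "v \<in> S" unfolding v_def using Ssc yS by blast
      have "Fo v = (\<lambda>r. (c s0 / k) * Fo (y (Suc s0)) r)" unfolding v_def using Fsc yS by blast
      also have "\<dots> = (\<lambda>r. c s0 * y s0 r)" using Fy[of s0] k0 unfolding k_def[symmetric] by simp
      finally have Fv: "Fo v = Fo u" using Fu by simp
      have "Fo (\<lambda>r. u r - v r) = (\<lambda>_. 0)" using Fdiff[OF uS vS] Fv by simp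
      moreover have "(\<lambda>r. u r - v r) \<in> S" using Sadd[OF uS Ssc[OF vS, of "-1"]] by simp
      ultimately obtain t where t: "(\<lambda>r. u r - v r) = (\<lambda>r. t * z r)" using kerF by blast
      have ueq: "u = (\<lambda>r. v r + t * y 0 r)"
      proof
        fix r
        have "u r - v r = t * z r" using fun_cong[OF t, of r] by simp
        then have "u r = t * z r + v r" by (simp add: diff_eq_eq)
        then show "u r = v r + t * y 0 r" by (simp add: y0 add_ac)
      qed
      have "v \<in> Ysp" unfolding v_def by (rule Ysp_sc[OF Ysp_y])
      moreover have "(\<lambda>r. t * y 0 r) \<in> Ysp" by (rule Ysp_sc[OF Ysp_y])
      ultimately have "(\<lambda>r. v r + t * y 0 r) \<in> Ysp" by (rule Ysp_add)
      then show ?thesis unfolding ueq .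
    qed
  qed
qed

lemma S_Ysp: assumes u: "u \<in> S" shows "u \<in> Ysp"
proof -
  have "\<forall>w\<in>wt ` I. proj wt w u \<in> Ysp"
  proof
    fix w
    obtain n where n: "(Fo ^^ n) (proj wt w u) = (\<lambda>_. 0)" using nil[OF projS[OF u, of w] wvec_proj] by (elim exE)
    show "proj wt w u \<in> Ysp" by (rule wv_in_Ysp[OF projS[OF u] wvec_proj n])
  qed
  then have "(\<lambda>r. \<Sum>w\<in>wt ` I. proj wt w u r) \<in> Ysp" by (intro Ysp_sum finite_imageI finI)
  then show ?thesis by (subst decomp[OF u])
qed

lemma repr: "u \<in> S \<Longrightarrow> u = (\<lambda>r. \<Sum>s\<le>e. coef u s * y s r)"
proof -
  assume "u \<in> S"
  then obtain c where c: "u = (\<lambda>r. \<Sum>s\<le>e. c s * y s r)" using S_Ysp unfolding Ysp_def by blast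
  have "(\<Sum>s\<le>e. coef u s * y s r) = (\<Sum>s\<le>e. c s * y s r)" for r
    by (rule sum.cong) (auto simp: c coef_repr)
  then show ?thesis using c by simp
qed

lemma coef_lin: "coef (\<lambda>r. \<Sum>x\<in>A. c x * f x r) s = (\<Sum>x\<in>A. c x * coef (f x) s)"
  unfolding coef_def by (simp add: sum_divide_distrib)

lemma coef_y: "s \<le> e \<Longrightarrow> s' \<le> e \<Longrightarrow> coef (y s) s' = (if s = s' then 1 else 0)"
  unfolding coef_def using rs_nz y_rs by auto

end


lemma sl2_iso_abs:
  fixes S :: "('i \<Rightarrow> 'k::field_char_0) set" and S' :: "('j \<Rightarrow> 'k) set"
  assumes A: "sl2_lw S Eo Fo wt I e z" and B: "sl2_lw S' Eo' Fo' wt' I' e z'"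
  shows "\<exists>\<phi>. (\<forall>u\<in>S. \<forall>v\<in>S. \<phi> (\<lambda>r. u r + v r) = (\<lambda>r. \<phi> u r + \<phi> v r)) \<and>
     (\<forall>t. \<forall>u\<in>S. \<phi> (\<lambda>p. t * u p) = (\<lambda>p. t * \<phi> u p)) \<and>
     bij_betw \<phi> S S' \<and>
     (\<forall>u\<in>S. \<phi> (Eo u) = Eo' (\<phi> u)) \<and> (\<forall>u\<in>S. \<phi> (Fo u) = Fo' (\<phi> u)) \<and>
     (\<forall>u\<in>S. \<phi> (\<lambda>r. of_int (wt r) * u r) = (\<lambda>r. of_int (wt' r) * \<phi> u r))"
proof -
  interpret A: sl2_lw S Eo Fo wt I e z by (rule A)
  interpret B: sl2_lw S' Eo' Fo' wt' I' e z' by (rule B)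
  define \<phi> where "\<phi> u = (\<lambda>r. \<Sum>s\<le>e. A.coef u s * B.y s r)" for u
  have lin: "\<phi> (\<lambda>r. \<Sum>x\<in>X. c x * f x r) = (\<lambda>r. \<Sum>x\<in>X. c x * \<phi> (f x) r)" if "finite X" for X c f
  proof
    fix r
    have "\<phi> (\<lambda>r. \<Sum>x\<in>X. c x * f x r) r = (\<Sum>s\<le>e. (\<Sum>x\<in>X. c x * A.coef (f x) s) * B.y s r)"
      unfolding \<phi>_def A.coef_lin ..
    also have "\<dots> = (\<Sum>x\<in>X. c x * (\<Sum>s\<le>e. A.coef (f x) s * B.y s r))"
      by (simp add: sum_distrib_left sum_distrib_right algebra_simps sum.swap[of _ X])
    finally show "\<phi> (\<lambda>r. \<Sum>x\<in>X. c x * f x r) r = (\<Sum>x\<in>X. c x * \<phi> (f x) r)"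
      unfolding \<phi>_def .
  qed
  have phiy: "\<phi> (A.y s) = B.y s" for s
  proof (cases "s \<le> e")
    case True
    show ?thesis
    proof
      fix r
      have "\<phi> (A.y s) r = (\<Sum>s'\<le>e. (if s = s' then 1 else 0) * B.y s' r)"
        unfolding \<phi>_def by (rule sum.cong) (auto simp: A.coef_y True)
      also have "\<dots> = (\<Sum>s'\<le>e. if s' = s then B.y s r else 0)" by (rule sum.cong) auto
      also have "\<dots> = B.y s r" using True by simp
      finally show "\<phi> (A.y s) r = B.y s r" .
    qed
  next
    case False
    then have "A.y s = (\<lambda>_. 0)" "B.y s = (\<lambda>_. 0)" using A.y_big B.y_big by auto
    then show ?thesis unfolding \<phi>_def A.coef_def by simp
  qed
  have Arep: "u = (\<lambda>r. \<Sum>s\<le>e. A.coef u s * A.y s r)" if "u \<in> S" for u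
    using A.repr that .
  have phirep: "\<phi> u = (\<lambda>r. \<Sum>s\<le>e. A.coef u s * B.y s r)" for u unfolding \<phi>_def ..
  have add: "\<phi> (\<lambda>r. u r + v r) = (\<lambda>r. \<phi> u r + \<phi> v r)" for u v
    unfolding \<phi>_def A.coef_def by (simp add: add_divide_distrib distrib_right sum.distrib)
  have sc: "\<phi> (\<lambda>p. t * u p) = (\<lambda>p. t * \<phi> u p)" for t u
    unfolding \<phi>_def A.coef_def by (simp add: sum_distrib_left algebra_simps)
  have Ecomm: "\<phi> (Eo u) = Eo' (\<phi> u)" if u: "u \<in> S" for u
  proof -
    have "Eo u = Eo (\<lambda>r. \<Sum>s\<le>e. A.coef u s * A.y s r)" using Arep[OF u] by simp
    also have "\<dots> = (\<lambda>r. \<Sum>s\<le>e. A.coef u s * A.y (Suc s) r)"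
      using A.Esum[of "{..e}" A.y "A.coef u"] A.yS by (simp add: A.ySuc)
    finally have "\<phi> (Eo u) = (\<lambda>r. \<Sum>s\<le>e. A.coef u s * B.y (Suc s) r)"
      using lin[of "{..e}" "A.coef u" "\<lambda>s. A.y (Suc s)"] by (simp add: phiy)
    moreover have "Eo' (\<phi> u) = (\<lambda>r. \<Sum>s\<le>e. A.coef u s * B.y (Suc s) r)"
      unfolding phirep using B.Esum[of "{..e}" B.y "A.coef u"] B.yS by (simp add: B.ySuc)
    ultimately show ?thesis by simp
  qed
  have Fcomm: "\<phi> (Fo u) = Fo' (\<phi> u)" if u: "u \<in> S" for u
  proof -
    define fc :: "nat \<Rightarrow> 'k" where "fc s = of_int (int s * (int e - int s + 1))" for s
    have "Fo u = Fo (\<lambda>r. \<Sum>s\<le>e. A.coef u s * A.y s r)" using Arep[OF u] by simp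
    also have "\<dots> = (\<lambda>r. \<Sum>s\<le>e. A.coef u s * (fc s * A.y (s - 1) r))"
      using A.Fsum[of "{..e}" A.y "A.coef u"] A.yS by (simp add: A.Fy' fc_def)
    also have "\<dots> = (\<lambda>r. \<Sum>s\<le>e. (A.coef u s * fc s) * A.y (s - 1) r)"
      by (simp add: algebra_simps)
    finally have "\<phi> (Fo u) = (\<lambda>r. \<Sum>s\<le>e. (A.coef u s * fc s) * B.y (s - 1) r)"
      using lin[of "{..e}" "\<lambda>s. A.coef u s * fc s" "\<lambda>s. A.y (s - 1)"] by (simp add: phiy)
    moreover have "Fo' (\<phi> u) = (\<lambda>r. \<Sum>s\<le>e. (A.coef u s * fc s) * B.y (s - 1) r)"
      unfolding phirep using B.Fsum[of "{..e}" B.y "A.coef u"] B.yS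
      by (simp add: B.Fy' fc_def algebra_simps)
    ultimately show ?thesis by simp
  qed
  have Hcomm: "\<phi> (\<lambda>r. of_int (wt r) * u r) = (\<lambda>r. of_int (wt' r) * \<phi> u r)" for u
  proof
    fix r
    have c: "A.coef (\<lambda>r. of_int (wt r) * u r) s = of_int (2 * int s - int e) * A.coef u s" if "s \<le> e" for s
      unfolding A.coef_def using A.rs_wt[OF that] by simp
    have "\<phi> (\<lambda>r. of_int (wt r) * u r) r = (\<Sum>s\<le>e. of_int (2 * int s - int e) * A.coef u s * B.y s r)"
      unfolding \<phi>_def by (rule sum.cong) (auto simp: c)
    also have "\<dots> = (\<Sum>s\<le>e. A.coef u s * (of_int (wt' r) * B.y s r))"
    proof (rule sum.cong)
      fix s assume "s \<in> {..e}"
      have "of_int (wt' r) * B.y s r = of_int (2 * int s - int e) * B.y s r"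
        using B.ywt[of s] unfolding wvec_def by (cases "B.y s r = 0") auto
      then show "of_int (2 * int s - int e) * A.coef u s * B.y s r = A.coef u s * (of_int (wt' r) * B.y s r)"
        by (metis mult.assoc mult.commute)
    qed simp
    also have "\<dots> = of_int (wt' r) * \<phi> u r" unfolding \<phi>_def by (simp add: sum_distrib_left algebra_simps)
    finally show "\<phi> (\<lambda>r. of_int (wt r) * u r) r = of_int (wt' r) * \<phi> u r" .
  qed
  have coefB: "B.coef (\<phi> u) s = A.coef u s" if "s \<le> e" for u s
    unfolding phirep using B.coef_repr[OF that] .
  have img: "\<phi> u \<in> S'" for u
    unfolding \<phi>_def using B.Ssum B.yS by blast
  have inj: "inj_on \<phi> S"
  proof
    fix u v assume u: "u \<in> S" and v: "v \<in> S" and eq: "\<phi> u = \<phi> v"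
    have "A.coef u s = A.coef v s" if "s \<le> e" for s using coefB[OF that, of u] coefB[OF that, of v] eq by simp
    then have "(\<lambda>r. \<Sum>s\<le>e. A.coef u s * A.y s r) = (\<lambda>r. \<Sum>s\<le>e. A.coef v s * A.y s r)" by simp
    then show "u = v" using Arep[OF u] Arep[OF v] by simp
  qed
  have surj: "S' \<subseteq> \<phi> ` S"
  proof
    fix v assume v: "v \<in> S'"
    define u where "u = (\<lambda>r. \<Sum>s\<le>e. B.coef v s * A.y s r)"
    have uS: "u \<in> S" unfolding u_def using A.Ssum A.yS by blast
    have "\<phi> u = (\<lambda>r. \<Sum>s\<le>e. B.coef v s * B.y s r)"
      unfolding u_def using lin[of "{..e}" "B.coef v" A.y] by (simp add: phiy)
    also have "\<dots> = v" using B.repr[OF v] by simp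
    finally show "v \<in> \<phi> ` S" using uS by blast
  qed
  have "bij_betw \<phi> S S'" unfolding bij_betw_def using inj surj img by blast
  then show ?thesis using add sc Ecomm Fcomm Hcomm by blast
qed


lemma Vrho_out: "\<not> (p \<le> a \<and> k \<le> a) \<Longrightarrow> Vrho a g p k = 0"
  unfolding Vrho_def by (cases g) auto

lemma Vrho_X[simp]: "Vrho a (X i) p k = 0"
  unfolding Vrho_def by simp

lemma sum_VE: "(\<Sum>k\<le>a. Vrho a E p k * f k) = (if p < a then of_nat (Suc p * (a - p)) * f (Suc p) else 0)"
proof -
  have "(\<Sum>k\<le>a. Vrho a E p k * f k) = (\<Sum>k\<le>a. if k = Suc p then (if p < a then of_nat (Suc p * (a - p)) * f (Suc p) else 0) else 0)"
    by (rule sum.cong) (auto simp: Vrho_def Suc_diff_Suc)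
  also have "\<dots> = (if p < a then of_nat (Suc p * (a - p)) * f (Suc p) else 0)" by simp
  finally show ?thesis .
qed

lemma sum_VF: "(\<Sum>k\<le>a. Vrho a F p k * f k) = (if 1 \<le> p \<and> p \<le> a then f (p - 1) else 0)"
proof -
  have "(\<Sum>k\<le>a. Vrho a F p k * f k) = (\<Sum>k\<le>a. if k = p - 1 then (if 1 \<le> p \<and> p \<le> a then f (p - 1) else 0) else 0)"
    by (rule sum.cong) (auto simp: Vrho_def)
  also have "\<dots> = (if 1 \<le> p \<and> p \<le> a then f (p - 1) else 0)" by auto
  finally show ?thesis .
qed

lemma sum_VH: "(\<Sum>k\<le>a. Vrho a H p k * f k) = (if p \<le> a then of_int (int a - 2 * int p) * f p else 0)"
proof -
  have "(\<Sum>k\<le>a. Vrho a H p k * f k) = (\<Sum>k\<le>a. if k = p then (if p \<le> a then of_int (int a - 2 * int p) * f p else 0) else 0)"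
    by (rule sum.cong) (auto simp: Vrho_def)
  also have "\<dots> = (if p \<le> a then of_int (int a - 2 * int p) * f p else 0)" by auto
  finally show ?thesis .
qed

lemma csum_VE: "(\<Sum>i'\<le>m. Vrho m E i' i * f i') = (if 1 \<le> i \<and> i \<le> m then of_nat (i * (m - i + 1)) * f (i - 1) else 0)"
proof -
  have "(\<Sum>i'\<le>m. Vrho m E i' i * f i') = (\<Sum>i'\<le>m. if i' = i - 1 then (if 1 \<le> i \<and> i \<le> m then of_nat (i * (m - i + 1)) * f (i - 1) else 0) else 0)"
    by (rule sum.cong) (auto simp: Vrho_def)
  also have "\<dots> = (if 1 \<le> i \<and> i \<le> m then of_nat (i * (m - i + 1)) * f (i - 1) else 0)" by auto
  finally show ?thesis .
qed

lemma csum_VF: "(\<Sum>i'\<le>m. Vrho m F i' i * f i') = (if i < m then f (Suc i) else 0)"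
proof -
  have "(\<Sum>i'\<le>m. Vrho m F i' i * f i') = (\<Sum>i'\<le>m. if i' = Suc i then (if i < m then f (Suc i) else 0) else 0)"
    by (rule sum.cong) (auto simp: Vrho_def)
  also have "\<dots> = (if i < m then f (Suc i) else 0)" by auto
  finally show ?thesis .
qed

lemma csum_VH: "(\<Sum>i'\<le>m. Vrho m H i' i * f i') = (if i \<le> m then of_int (int m - 2 * int i) * f i else 0)"
proof -
  have "(\<Sum>i'\<le>m. Vrho m H i' i * f i') = (\<Sum>i'\<le>m. if i' = i then (if i \<le> m then of_int (int m - 2 * int i) * f i else 0) else 0)"
    by (rule sum.cong) (auto simp: Vrho_def)
  also have "\<dots> = (if i \<le> m then of_int (int m - 2 * int i) * f i else 0)" by auto
  finally show ?thesis .
qed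

lemma EI_Inl[simp]: "Inl p \<in> EI a b \<longleftrightarrow> p \<le> a" unfolding EI_def by auto
lemma EI_Inr[simp]: "Inr p \<in> EI a b \<longleftrightarrow> p \<le> b" unfolding EI_def by auto
lemma finite_EI[simp]: "finite (EI a b)" unfolding EI_def by simp

lemma sum_EI: "(\<Sum>s\<in>EI a b. f s) = (\<Sum>k\<le>a. f (Inl k)) + (\<Sum>j\<le>b. f (Inr j))"
proof -
  have "(\<Sum>s\<in>EI a b. f s) = (\<Sum>s\<in>Inl ` {..a}. f s) + (\<Sum>s\<in>Inr ` {..b}. f s)"
    unfolding EI_def by (rule sum.union_disjoint) auto
  also have "\<dots> = (\<Sum>k\<le>a. f (Inl k)) + (\<Sum>j\<le>b. f (Inr j))"
    by (simp add: sum.reindex)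
  finally show ?thesis .
qed

lemma Erho_LL[simp]: "Erho a b C g (Inl p) (Inl k) = Vrho a g p k"
  unfolding Erho_def by (cases g) (auto simp: Vrho_out)

lemma Erho_RR[simp]: "Erho a b C g (Inr p) (Inr k) = Vrho b g p k"
  unfolding Erho_def by (cases g) (auto simp: Vrho_out)

lemma Erho_LR: "Erho a b C g (Inl k) (Inr j) = (case g of X i \<Rightarrow> (if k \<le> a \<and> j \<le> b then C i j k else 0) | _ \<Rightarrow> 0)"
  unfolding Erho_def by (cases g) auto

lemma Erho_LR_X[simp]: "Erho a b C (X i) (Inl k) (Inr j) = (if k \<le> a \<and> j \<le> b then C i j k else 0)"
  unfolding Erho_def by auto

lemma Erho_LR_E[simp]: "Erho a b C E (Inl k) (Inr j) = 0" unfolding Erho_def by auto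
lemma Erho_LR_F[simp]: "Erho a b C F (Inl k) (Inr j) = 0" unfolding Erho_def by auto
lemma Erho_LR_H[simp]: "Erho a b C H (Inl k) (Inr j) = 0" unfolding Erho_def by auto

lemma Erho_RL[simp]: "Erho a b C g (Inr j) (Inl k) = 0"
  unfolding Erho_def by (cases g) auto

lemma Erho_out: "r \<notin> EI a b \<Longrightarrow> Erho a b C g r s = 0"
  unfolding Erho_def by simp

definition mact :: "('i \<Rightarrow> 'i \<Rightarrow> 'k::field) \<Rightarrow> 'i set \<Rightarrow> ('i \<Rightarrow> 'k) \<Rightarrow> 'i \<Rightarrow> 'k" where
  "mact M I u = (\<lambda>r. \<Sum>s\<in>I. M r s * u s)"

lemma act_mact: "act rho I g u = mact (rho g) I u"
  unfolding act_def mact_def ..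

definition tm :: "('i \<Rightarrow> 'i \<Rightarrow> 'k::field) \<Rightarrow> ('j \<Rightarrow> 'j \<Rightarrow> 'k) \<Rightarrow> 'i \<times> 'j \<Rightarrow> 'i \<times> 'j \<Rightarrow> 'k" where
  "tm A B r s = A (fst r) (fst s) * (if snd r = snd s then 1 else 0) + (if fst r = fst s then 1 else 0) * B (snd r) (snd s)"

lemma trho_tm: "trho rho1 rho2 g = tm (rho1 g) (rho2 g)"
  unfolding trho_def tm_def by (intro ext) simp

lemma mact_tm:
  assumes "finite I1" "finite I2"
  shows "mact (tm A B) (I1 \<times> I2) u (r1, r2) =
    (if r2 \<in> I2 then \<Sum>s1\<in>I1. A r1 s1 * u (s1, r2) else 0) +
    (if r1 \<in> I1 then \<Sum>s2\<in>I2. B r2 s2 * u (r1, s2) else 0)"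
proof -
  have "mact (tm A B) (I1 \<times> I2) u (r1, r2) = (\<Sum>s1\<in>I1. \<Sum>s2\<in>I2. tm A B (r1, r2) (s1, s2) * u (s1, s2))"
    unfolding mact_def by (simp add: sum.cartesian_product)
  also have "\<dots> = (\<Sum>s1\<in>I1. \<Sum>s2\<in>I2. A r1 s1 * (if r2 = s2 then u (s1, s2) else 0) + (if r1 = s1 then B r2 s2 * u (s1, s2) else 0))"
    by (intro sum.cong refl) (simp add: tm_def algebra_simps)
  also have "\<dots> = (\<Sum>s1\<in>I1. \<Sum>s2\<in>I2. A r1 s1 * (if r2 = s2 then u (s1, s2) else 0)) +
     (\<Sum>s1\<in>I1. \<Sum>s2\<in>I2. (if r1 = s1 then B r2 s2 * u (s1, s2) else 0))"
    by (simp add: sum.distrib)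
  also have "(\<Sum>s1\<in>I1. \<Sum>s2\<in>I2. A r1 s1 * (if r2 = s2 then u (s1, s2) else 0)) =
      (if r2 \<in> I2 then \<Sum>s1\<in>I1. A r1 s1 * u (s1, r2) else 0)"
    using assms by (simp add: sum_distrib_left[symmetric] sum.delta)
  also have "(\<Sum>s1\<in>I1. \<Sum>s2\<in>I2. (if r1 = s1 then B r2 s2 * u (s1, s2) else 0)) =
      (if r1 \<in> I1 then \<Sum>s2\<in>I2. B r2 s2 * u (r1, s2) else 0)"
  proof -
    have "(\<Sum>s1\<in>I1. \<Sum>s2\<in>I2. (if r1 = s1 then B r2 s2 * u (s1, s2) else 0)) =
        (\<Sum>s1\<in>I1. if r1 = s1 then (\<Sum>s2\<in>I2. B r2 s2 * u (s1, s2)) else 0)"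
      by (rule sum.cong) auto
    then show ?thesis using assms by (simp add: sum.delta)
  qed
  finally show ?thesis .
qed

lemma mact_tm_in:
  assumes "finite I1" "finite I2" "r1 \<in> I1" "r2 \<in> I2"
  shows "mact (tm A B) (I1 \<times> I2) u (r1, r2) =
    (\<Sum>s1\<in>I1. A r1 s1 * u (s1, r2)) + (\<Sum>s2\<in>I2. B r2 s2 * u (r1, s2))"
  using mact_tm[OF assms(1,2), of A B u r1 r2] assms(3,4) by simp

lemma mact_tm_out:
  assumes "finite I1" "finite I2" "(r1, r2) \<notin> I1 \<times> I2"
    and "\<forall>r s. r \<notin> I1 \<longrightarrow> A r s = 0" and "\<forall>r s. r \<notin> I2 \<longrightarrow> B r s = 0"
  shows "mact (tm A B) (I1 \<times> I2) u (r1, r2) = 0"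
proof -
  have h: "mact (tm A B) (I1 \<times> I2) u (r1, r2) =
    (if r2 \<in> I2 then \<Sum>s1\<in>I1. A r1 s1 * u (s1, r2) else 0) +
    (if r1 \<in> I1 then \<Sum>s2\<in>I2. B r2 s2 * u (r1, s2) else 0)" by (rule mact_tm[OF assms(1,2)])
  show ?thesis unfolding h using assms(3-5) by auto
qed


lemma tm_comm:
  fixes A1 B1 C1 :: "'i \<Rightarrow> 'i \<Rightarrow> 'k::field" and A2 B2 C2 :: "'j \<Rightarrow> 'j \<Rightarrow> 'k"
  assumes f1: "finite I1" and f2: "finite I2" and r1: "r1 \<in> I1" and r2: "r2 \<in> I2"
    and c1: "\<And>s. s \<in> I1 \<Longrightarrow> (\<Sum>t\<in>I1. A1 r1 t * B1 t s - B1 r1 t * A1 t s) = C1 r1 s"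
    and c2: "\<And>s. s \<in> I2 \<Longrightarrow> (\<Sum>t\<in>I2. A2 r2 t * B2 t s - B2 r2 t * A2 t s) = C2 r2 s"
  shows "mact (tm A1 A2) (I1 \<times> I2) (mact (tm B1 B2) (I1 \<times> I2) u) (r1, r2)
       - mact (tm B1 B2) (I1 \<times> I2) (mact (tm A1 A2) (I1 \<times> I2) u) (r1, r2)
       = mact (tm C1 C2) (I1 \<times> I2) u (r1, r2)"
proof -
  let ?I = "I1 \<times> I2"
  define X where "X P1 P2 Q1 Q2 = mact (tm P1 P2) ?I (mact (tm Q1 Q2) ?I u) (r1, r2)" for P1 P2 Q1 Q2
  have expand: "X P1 P2 Q1 Q2 =
      (\<Sum>s1\<in>I1. \<Sum>t1\<in>I1. P1 r1 s1 * (Q1 s1 t1 * u (t1, r2))) +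
      (\<Sum>s1\<in>I1. \<Sum>t2\<in>I2. P1 r1 s1 * (Q2 r2 t2 * u (s1, t2))) +
      ((\<Sum>s2\<in>I2. \<Sum>t1\<in>I1. P2 r2 s2 * (Q1 r1 t1 * u (t1, s2))) +
      (\<Sum>s2\<in>I2. \<Sum>t2\<in>I2. P2 r2 s2 * (Q2 s2 t2 * u (r1, t2))))"
    for P1 :: "'i \<Rightarrow> 'i \<Rightarrow> 'k" and P2 :: "'j \<Rightarrow> 'j \<Rightarrow> 'k" and Q1 Q2
  proof -
    have "X P1 P2 Q1 Q2 = (\<Sum>s1\<in>I1. P1 r1 s1 * mact (tm Q1 Q2) ?I u (s1, r2)) + (\<Sum>s2\<in>I2. P2 r2 s2 * mact (tm Q1 Q2) ?I u (r1, s2))"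
      unfolding X_def by (rule mact_tm_in[OF f1 f2 r1 r2])
    also have "(\<Sum>s1\<in>I1. P1 r1 s1 * mact (tm Q1 Q2) ?I u (s1, r2)) =
       (\<Sum>s1\<in>I1. P1 r1 s1 * ((\<Sum>t1\<in>I1. Q1 s1 t1 * u (t1, r2)) + (\<Sum>t2\<in>I2. Q2 r2 t2 * u (s1, t2))))"
      by (rule sum.cong) (simp_all add: mact_tm_in[OF f1 f2 _ r2])
    also have "(\<Sum>s2\<in>I2. P2 r2 s2 * mact (tm Q1 Q2) ?I u (r1, s2)) =
       (\<Sum>s2\<in>I2. P2 r2 s2 * ((\<Sum>t1\<in>I1. Q1 r1 t1 * u (t1, s2)) + (\<Sum>t2\<in>I2. Q2 s2 t2 * u (r1, t2))))"
      by (rule sum.cong) (simp_all add: mact_tm_in[OF f1 f2 r1])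
    finally show ?thesis by (simp add: distrib_left sum.distrib sum_distrib_left)
  qed
  have x1: "(\<Sum>s1\<in>I1. \<Sum>t2\<in>I2. A1 r1 s1 * (B2 r2 t2 * u (s1, t2))) =
            (\<Sum>s2\<in>I2. \<Sum>t1\<in>I1. B2 r2 s2 * (A1 r1 t1 * u (t1, s2)))"
    by (subst sum.swap) (simp add: mult.left_commute)
  have x2: "(\<Sum>s2\<in>I2. \<Sum>t1\<in>I1. A2 r2 s2 * (B1 r1 t1 * u (t1, s2))) =
            (\<Sum>s1\<in>I1. \<Sum>t2\<in>I2. B1 r1 s1 * (A2 r2 t2 * u (s1, t2)))"
    by (subst sum.swap) (simp add: mult.left_commute)
  have d1: "(\<Sum>s1\<in>I1. \<Sum>t1\<in>I1. A1 r1 s1 * (B1 s1 t1 * u (t1, r2))) - (\<Sum>s1\<in>I1. \<Sum>t1\<in>I1. B1 r1 s1 * (A1 s1 t1 * u (t1, r2)))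
      = (\<Sum>t1\<in>I1. C1 r1 t1 * u (t1, r2))"
  proof -
    have "(\<Sum>s1\<in>I1. \<Sum>t1\<in>I1. A1 r1 s1 * (B1 s1 t1 * u (t1, r2))) - (\<Sum>s1\<in>I1. \<Sum>t1\<in>I1. B1 r1 s1 * (A1 s1 t1 * u (t1, r2)))
       = (\<Sum>t1\<in>I1. \<Sum>s1\<in>I1. (A1 r1 s1 * B1 s1 t1 - B1 r1 s1 * A1 s1 t1) * u (t1, r2))"
      by (subst (1 2) sum.swap) (simp add: sum_subtractf[symmetric] algebra_simps)
    also have "\<dots> = (\<Sum>t1\<in>I1. (\<Sum>s1\<in>I1. A1 r1 s1 * B1 s1 t1 - B1 r1 s1 * A1 s1 t1) * u (t1, r2))"
      by (simp add: sum_distrib_right)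
    also have "\<dots> = (\<Sum>t1\<in>I1. C1 r1 t1 * u (t1, r2))"
      by (rule sum.cong) (simp_all add: c1)
    finally show ?thesis .
  qed
  have d2: "(\<Sum>s2\<in>I2. \<Sum>t2\<in>I2. A2 r2 s2 * (B2 s2 t2 * u (r1, t2))) - (\<Sum>s2\<in>I2. \<Sum>t2\<in>I2. B2 r2 s2 * (A2 s2 t2 * u (r1, t2)))
      = (\<Sum>t2\<in>I2. C2 r2 t2 * u (r1, t2))"
  proof -
    have "(\<Sum>s2\<in>I2. \<Sum>t2\<in>I2. A2 r2 s2 * (B2 s2 t2 * u (r1, t2))) - (\<Sum>s2\<in>I2. \<Sum>t2\<in>I2. B2 r2 s2 * (A2 s2 t2 * u (r1, t2)))
       = (\<Sum>t2\<in>I2. \<Sum>s2\<in>I2. (A2 r2 s2 * B2 s2 t2 - B2 r2 s2 * A2 s2 t2) * u (r1, t2))"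
      by (subst (1 2) sum.swap) (simp add: sum_subtractf[symmetric] algebra_simps)
    also have "\<dots> = (\<Sum>t2\<in>I2. (\<Sum>s2\<in>I2. A2 r2 s2 * B2 s2 t2 - B2 r2 s2 * A2 s2 t2) * u (r1, t2))"
      by (simp add: sum_distrib_right)
    also have "\<dots> = (\<Sum>t2\<in>I2. C2 r2 t2 * u (r1, t2))"
      by (rule sum.cong) (simp_all add: c2)
    finally show ?thesis .
  qed
  have "X A1 A2 B1 B2 - X B1 B2 A1 A2 = (\<Sum>t1\<in>I1. C1 r1 t1 * u (t1, r2)) + (\<Sum>t2\<in>I2. C2 r2 t2 * u (r1, t2))"
    unfolding expand using x1 x2 d1 d2 by (simp add: algebra_simps)
  then show ?thesis unfolding X_def using mact_tm_in[OF f1 f2 r1 r2, of C1 C2 u] by simp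
qed


lemma VEF:
  assumes "p \<le> a" "q \<le> a"
  shows "(\<Sum>k\<le>a. Vrho a E p k * Vrho a F k q - Vrho a F p k * Vrho a E k q) = (Vrho a H p q :: 'k::field_char_0)"
proof -
  have "(\<Sum>k\<le>a. Vrho a E p k * Vrho a F k q - Vrho a F p k * Vrho a E k q) =
     (\<Sum>k\<le>a. Vrho a E p k * Vrho a F k q) - (\<Sum>k\<le>a. Vrho a F p k * Vrho a E k q)"
    by (rule sum_subtractf)
  also have "\<dots> = (if p < a then of_nat (Suc p * (a - p)) * Vrho a F (Suc p) q else 0) -
       (if 1 \<le> p \<and> p \<le> a then Vrho a E (p - 1) q else 0)"
    unfolding sum_VE sum_VF ..
  also have "\<dots> = (Vrho a H p q :: 'k)"
  proof (cases "p = q")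
    case True
    have key: "(if p < a then int (Suc p * (a - p)) else 0) - (if 1 \<le> p then int (p * (a - p + 1)) else 0) = int a - 2 * int p"
    proof -
      have pa: "int (a - p) = int a - int p" using True assms by (simp add: of_nat_diff)
      have h1: "int (Suc p * (a - p)) = (int p + 1) * (int a - int p)"
        by (simp only: of_nat_mult pa) simp
      have h2: "int (p * (a - p + 1)) = int p * (int a - int p + 1)"
        by (simp only: of_nat_mult of_nat_add pa) simp
      show ?thesis unfolding h1 h2 using True assms by (cases "p = 0"; cases "p < a") (simp_all add: algebra_simps)
    qed
    have "(if p < a then of_nat (Suc p * (a - p)) * Vrho a F (Suc p) q else 0) -
       (if 1 \<le> p \<and> p \<le> a then Vrho a E (p - 1) q else 0) =
       (of_int ((if p < a then int (Suc p * (a - p)) else 0) - (if 1 \<le> p then int (p * (a - p + 1)) else 0)) :: 'k)"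
      using True assms by (auto simp: Vrho_def)
    also have "\<dots> = Vrho a H p q" unfolding key using True assms by (simp add: Vrho_def)
    finally show ?thesis .
  next
    case False
    then show ?thesis by (auto simp: Vrho_def)
  qed
  finally show ?thesis .
qed

lemma M1:
  assumes "r \<in> EI a b" "s \<in> EI a b"
  shows "(\<Sum>t\<in>EI a b. Erho a b C E r t * Erho a b C F t s - Erho a b C F r t * Erho a b C E t s) = (Erho a b C H r s :: 'k::field_char_0)"
  using assms by (cases r; cases s) (simp_all add: sum_EI VEF)

lemma M2:
  assumes eqv: "equivariant m b a C" and g: "g \<in> {E, F, H}" and i: "i \<le> m"
    and r: "r \<in> EI a b" and s: "s \<in> EI a b"
  shows "(\<Sum>t\<in>EI a b. Erho a b C g r t * Erho a b C (X i) t s - Erho a b C (X i) r t * Erho a b C g t s)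
     = (\<Sum>i'\<le>m. Vrho m g i' i * Erho a b C (X i') r s :: 'k::field_char_0)"
proof (cases r)
  case (Inl k)
  note rk = Inl
  show ?thesis
  proof (cases s)
    case (Inl q) then show ?thesis using rk g by (auto simp: sum_EI)
  next
    case (Inr j)
    have k: "k \<le> a" and j: "j \<le> b" using r s rk Inr by auto
    have eq: "(\<Sum>i'\<le>m. Vrho m g i' i * C i' j k) + (\<Sum>j'\<le>b. Vrho b g j' j * C i j' k) = (\<Sum>k'\<le>a. Vrho a g k k' * C i j k')"
      using eqv g i j k unfolding equivariant_def by blast
    have "(\<Sum>t\<in>EI a b. Erho a b C g r t * Erho a b C (X i) t s - Erho a b C (X i) r t * Erho a b C g t s)
        = (\<Sum>k'\<le>a. Vrho a g k k' * C i j k') - (\<Sum>j'\<le>b. Vrho b g j' j * C i j' k)"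
      using rk Inr g k j by (auto simp: sum_EI sum_subtractf algebra_simps)
    also have "\<dots> = (\<Sum>i'\<le>m. Vrho m g i' i * C i' j k)" by (simp add: eq[symmetric])
    also have "\<dots> = (\<Sum>i'\<le>m. Vrho m g i' i * Erho a b C (X i') r s)"
      using rk Inr k j by simp
    finally show ?thesis .
  qed
next
  case (Inr p)
  note rp = Inr
  show ?thesis
  proof (cases s)
    case (Inl q) then show ?thesis using rp g by (auto simp: sum_EI)
  next
    case (Inr q) then show ?thesis using rp g by (auto simp: sum_EI)
  qed
qed


lemma mact_add: "mact M I (\<lambda>r. u r + v r) = (\<lambda>r. mact M I u r + mact M I v r)"
  unfolding mact_def by (simp add: distrib_left sum.distrib)

lemma mact_sc: "mact M I (\<lambda>r. t * u r) = (\<lambda>r. t * mact M I u r)"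
  unfolding mact_def by (simp add: sum_distrib_left algebra_simps)

lemma mact_zero: "mact M I (\<lambda>_. 0) = (\<lambda>_. 0)"
  unfolding mact_def by simp

lemma mact_tm_lin:
  assumes "finite I1" "finite I2" "r1 \<in> I1" "r2 \<in> I2" "finite K"
  shows "mact (tm (\<lambda>x y. \<Sum>k\<in>K. c k * P k x y) (\<lambda>x y. \<Sum>k\<in>K. c k * Q k x y)) (I1 \<times> I2) u (r1, r2)
       = (\<Sum>k\<in>K. c k * mact (tm (P k) (Q k)) (I1 \<times> I2) u (r1, r2))"
proof -
  have "mact (tm (\<lambda>x y. \<Sum>k\<in>K. c k * P k x y) (\<lambda>x y. \<Sum>k\<in>K. c k * Q k x y)) (I1 \<times> I2) u (r1, r2)
     = (\<Sum>s1\<in>I1. (\<Sum>k\<in>K. c k * P k r1 s1) * u (s1, r2)) + (\<Sum>s2\<in>I2. (\<Sum>k\<in>K. c k * Q k r2 s2) * u (r1, s2))"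
    by (rule mact_tm_in[OF assms(1-4)])
  also have "\<dots> = (\<Sum>k\<in>K. c k * ((\<Sum>s1\<in>I1. P k r1 s1 * u (s1, r2)) + (\<Sum>s2\<in>I2. Q k r2 s2 * u (r1, s2))))"
    by (simp add: sum_distrib_left sum_distrib_right sum.distrib distrib_left sum.swap[of _ K] algebra_simps)
  also have "\<dots> = (\<Sum>k\<in>K. c k * mact (tm (P k) (Q k)) (I1 \<times> I2) u (r1, r2))"
    by (simp add: mact_tm_in[OF assms(1-4)])
  finally show ?thesis .
qed

definition Wt :: "('i \<Rightarrow> int) \<Rightarrow> ('j \<Rightarrow> int) \<Rightarrow> 'i \<times> 'j \<Rightarrow> int" where
  "Wt w1 w2 r = w1 (fst r) + w2 (snd r)"

lemma mact_shift:
  fixes A :: "'i \<Rightarrow> 'i \<Rightarrow> 'k::field" and B :: "'j \<Rightarrow> 'j \<Rightarrow> 'k"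
  assumes f: "finite I1" "finite I2"
    and sA: "\<And>r s. A r s \<noteq> 0 \<Longrightarrow> w1 r = w1 s + \<delta>"
    and sB: "\<And>r s. B r s \<noteq> 0 \<Longrightarrow> w2 r = w2 s + \<delta>"
    and u: "wvec (Wt w1 w2) w u"
  shows "wvec (Wt w1 w2) (w + \<delta>) (mact (tm A B) (I1 \<times> I2) u)"
  unfolding wvec_def
proof (intro allI impI)
  fix r assume nz: "mact (tm A B) (I1 \<times> I2) u r \<noteq> 0"
  obtain r1 r2 where r: "r = (r1, r2)" by (cases r)
  have h: "mact (tm A B) (I1 \<times> I2) u (r1, r2) =
    (if r2 \<in> I2 then \<Sum>s1\<in>I1. A r1 s1 * u (s1, r2) else 0) +
    (if r1 \<in> I1 then \<Sum>s2\<in>I2. B r2 s2 * u (r1, s2) else 0)" by (rule mact_tm[OF f])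
  show "Wt w1 w2 r = w + \<delta>"
  proof (rule ccontr)
    assume ne: "Wt w1 w2 r \<noteq> w + \<delta>"
    have t1: "A r1 s1 * u (s1, r2) = 0" for s1
    proof (rule ccontr)
      assume "A r1 s1 * u (s1, r2) \<noteq> 0"
      then have "A r1 s1 \<noteq> 0" "u (s1, r2) \<noteq> 0" by auto
      then have "w1 r1 = w1 s1 + \<delta>" "w1 s1 + w2 r2 = w" using sA u unfolding wvec_def Wt_def by force+
      then show False using ne r unfolding Wt_def by simp
    qed
    have t2: "B r2 s2 * u (r1, s2) = 0" for s2
    proof (rule ccontr)
      assume "B r2 s2 * u (r1, s2) \<noteq> 0"
      then have "B r2 s2 \<noteq> 0" "u (r1, s2) \<noteq> 0" by auto
      then have "w2 r2 = w2 s2 + \<delta>" "w1 r1 + w2 s2 = w" using sB u unfolding wvec_def Wt_def by force+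
      then show False using ne r unfolding Wt_def by simp
    qed
    have "mact (tm A B) (I1 \<times> I2) u (r1, r2) = 0" unfolding h by (simp only: t1 t2 sum.neutral_const) simp
    then show False using nz r by simp
  qed
qed

lemma mact_proj:
  fixes A :: "'i \<Rightarrow> 'i \<Rightarrow> 'k::field" and B :: "'j \<Rightarrow> 'j \<Rightarrow> 'k"
  assumes f: "finite I1" "finite I2"
    and sA: "\<And>r s. A r s \<noteq> 0 \<Longrightarrow> w1 r = w1 s + \<delta>"
    and sB: "\<And>r s. B r s \<noteq> 0 \<Longrightarrow> w2 r = w2 s + \<delta>"
  shows "mact (tm A B) (I1 \<times> I2) (proj (Wt w1 w2) w u) = proj (Wt w1 w2) (w + \<delta>) (mact (tm A B) (I1 \<times> I2) u)"
proof
  fix r :: "'i \<times> 'j"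
  obtain r1 r2 where r: "r = (r1, r2)" by (cases r)
  note h = mact_tm[OF f, of A B _ r1 r2]
  show "mact (tm A B) (I1 \<times> I2) (proj (Wt w1 w2) w u) r = proj (Wt w1 w2) (w + \<delta>) (mact (tm A B) (I1 \<times> I2) u) r"
  proof (cases "Wt w1 w2 r = w + \<delta>")
    case True
    have t1: "A r1 s1 * proj (Wt w1 w2) w u (s1, r2) = A r1 s1 * u (s1, r2)" for s1
      using sA[of r1 s1] True r unfolding proj_def Wt_def by (cases "A r1 s1 = 0") auto
    have t2: "B r2 s2 * proj (Wt w1 w2) w u (r1, s2) = B r2 s2 * u (r1, s2)" for s2
      using sB[of r2 s2] True r unfolding proj_def Wt_def by (cases "B r2 s2 = 0") auto
    have T': "Wt w1 w2 (r1, r2) = w + \<delta>" using True r by simp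
    have "mact (tm A B) (I1 \<times> I2) (proj (Wt w1 w2) w u) (r1, r2) = mact (tm A B) (I1 \<times> I2) u (r1, r2)"
      unfolding h[of "proj (Wt w1 w2) w u"] h[of u] by (simp only: t1 t2)
    then show ?thesis using T' r by (simp add: proj_def)
  next
    case False
    have t1: "A r1 s1 * proj (Wt w1 w2) w u (s1, r2) = 0" for s1
      using sA[of r1 s1] False r unfolding proj_def Wt_def by (cases "A r1 s1 = 0") auto
    have t2: "B r2 s2 * proj (Wt w1 w2) w u (r1, s2) = 0" for s2
      using sB[of r2 s2] False r unfolding proj_def Wt_def by (cases "B r2 s2 = 0") auto
    have F': "Wt w1 w2 (r1, r2) \<noteq> w + \<delta>" using False r by simp
    have "mact (tm A B) (I1 \<times> I2) (proj (Wt w1 w2) w u) (r1, r2) = 0"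
      unfolding h[of "proj (Wt w1 w2) w u"] by (simp only: t1 t2 sum.neutral_const) simp
    then show ?thesis using F' r by (simp add: proj_def)
  qed
qed

definition wE :: "nat \<Rightarrow> nat \<Rightarrow> nat + nat \<Rightarrow> int" where
  "wE a b = case_sum (\<lambda>p. int a - 2 * int p) (\<lambda>j. int b - 2 * int j)"

lemma wE_simps[simp]: "wE a b (Inl p) = int a - 2 * int p" "wE a b (Inr j) = int b - 2 * int j"
  unfolding wE_def by simp_all

lemma Erho_H: "r \<in> EI a b \<Longrightarrow> s \<in> EI a b \<Longrightarrow> Erho a b C H r s = (if r = s then of_int (wE a b r) else 0)"
  by (cases r; cases s) (auto simp: Vrho_def)

lemma Vrho_shift_E: "Vrho a E p k \<noteq> 0 \<Longrightarrow> int a - 2 * int p = int a - 2 * int k + 2"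
  unfolding Vrho_def by (auto split: if_splits)
lemma Vrho_shift_F: "Vrho a F p k \<noteq> 0 \<Longrightarrow> int a - 2 * int p = int a - 2 * int k + (-2)"
  unfolding Vrho_def by (auto split: if_splits)
lemma Vrho_shift_H: "Vrho a H p k \<noteq> 0 \<Longrightarrow> int a - 2 * int p = int a - 2 * int k + 0"
  unfolding Vrho_def by (auto split: if_splits)

lemma Erho_shift_E: "Erho a b C E r s \<noteq> 0 \<Longrightarrow> wE a b r = wE a b s + 2"
  by (cases r; cases s) (auto dest: Vrho_shift_E)
lemma Erho_shift_F: "Erho a b C F r s \<noteq> 0 \<Longrightarrow> wE a b r = wE a b s + (-2)"
  by (cases r; cases s) (auto dest: Vrho_shift_F)
lemma Erho_shift_H: "Erho a b C H r s \<noteq> 0 \<Longrightarrow> wE a b r = wE a b s + 0"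
  by (cases r; cases s) (auto dest: Vrho_shift_H)

lemma equiv_H:
  assumes "equivariant m b a C" "i \<le> m" "j \<le> b" "k \<le> a" "C i j k \<noteq> (0::'k::field_char_0)"
  shows "int m - 2 * int i + (int b - 2 * int j) = int a - 2 * int k"
proof -
  have "(\<Sum>i'\<le>m. Vrho m H i' i * C i' j k) + (\<Sum>j'\<le>b. Vrho b H j' j * C i j' k) = (\<Sum>k'\<le>a. Vrho a H k k' * C i j k')"
    using assms(1-4) unfolding equivariant_def by blast
  then have "of_int (int m - 2 * int i) * C i j k + of_int (int b - 2 * int j) * C i j k = of_int (int a - 2 * int k) * C i j k"
    using assms(2-4) by (simp add: csum_VH sum_VH)
  then have "(of_int (int m - 2 * int i + (int b - 2 * int j)) - of_int (int a - 2 * int k)) * C i j k = 0"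
    by (simp add: algebra_simps)
  then have "(of_int (int m - 2 * int i + (int b - 2 * int j) - (int a - 2 * int k)) :: 'k) = 0"
    using assms(5) by simp
  then show ?thesis by (metis eq_iff_diff_eq_0 of_int_eq_0_iff)
qed

lemma Erho_shift_X:
  assumes "equivariant m b a C" "i \<le> m" "Erho a b C (X i) r s \<noteq> (0::'k::field_char_0)"
  shows "wE a b r = wE a b s + (int m - 2 * int i)"
proof (cases r)
  case (Inl k)
  then show ?thesis
  proof (cases s)
    case (Inr j)
    then have "k \<le> a" "j \<le> b" "C i j k \<noteq> 0" using assms(3) Inl by (auto split: if_splits)
    then show ?thesis using equiv_H[OF assms(1,2)] Inl Inr by fastforce
  qed (use assms Inl in auto)
qed (use assms in \<open>cases s; auto\<close>)


locale conc =
  fixes m a b c d :: nat and C1 C2 :: "nat \<Rightarrow> nat \<Rightarrow> nat \<Rightarrow> 'k::field_char_0"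
  assumes eq1: "equivariant m b a C1" and eq2: "equivariant m d c C2"
begin

abbreviation "Ix \<equiv> EI a b \<times> EI c d"
abbreviation "rho \<equiv> trho (Erho a b C1) (Erho c d C2)"
abbreviation "Op g \<equiv> act rho Ix g"
abbreviation "wt \<equiv> Wt (wE a b) (wE c d)"
abbreviation "SS \<equiv> S1 m a b C1 c d C2"

definition BL where "BL = (Inl ` {..a} \<times> Inr ` {..d}) \<union> (Inr ` {..b} \<times> Inl ` {..c})"

lemma BL_simps[simp]:
  "(Inl x, Inr y) \<in> BL \<longleftrightarrow> x \<le> a \<and> y \<le> d"
  "(Inr x, Inl y) \<in> BL \<longleftrightarrow> x \<le> b \<and> y \<le> c"
  "(Inl x, Inl y) \<notin> BL"
  "(Inr x, Inr y) \<notin> BL"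
  unfolding BL_def by auto

lemma BL_Ix: "p \<in> BL \<Longrightarrow> p \<in> Ix" unfolding BL_def by auto

lemma SS_iff: "u \<in> SS \<longleftrightarrow> (\<forall>p. p \<notin> BL \<longrightarrow> u p = 0) \<and> (\<forall>i\<le>m. Op (X i) u = (\<lambda>_. 0))"
  unfolding S1_def BL_def by (simp add: zero_fun_def)

lemma Op_mact: "Op g u = mact (tm (Erho a b C1 g) (Erho c d C2 g)) Ix u"
  by (simp add: act_mact trho_tm)

lemma Op_out: "r \<notin> Ix \<Longrightarrow> Op g u r = 0"
proof -
  assume r: "r \<notin> Ix"
  obtain r1 r2 where rr: "r = (r1, r2)" by (cases r)
  show ?thesis unfolding Op_mact rr
    by (rule mact_tm_out) (use r rr in \<open>auto simp: Erho_out\<close>)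
qed

lemma Op_in: "r1 \<in> EI a b \<Longrightarrow> r2 \<in> EI c d \<Longrightarrow> Op g u (r1, r2) =
   (\<Sum>s1\<in>EI a b. Erho a b C1 g r1 s1 * u (s1, r2)) + (\<Sum>s2\<in>EI c d. Erho c d C2 g r2 s2 * u (r1, s2))"
  unfolding Op_mact by (rule mact_tm_in) auto

lemma Op_add: "Op g (\<lambda>r. u r + v r) = (\<lambda>r. Op g u r + Op g v r)"
  unfolding Op_mact by (rule mact_add)
lemma Op_sc: "Op g (\<lambda>r. t * u r) = (\<lambda>r. t * Op g u r)"
  unfolding Op_mact by (rule mact_sc)
lemma Op_zero: "Op g (\<lambda>_. 0) = (\<lambda>_. 0)"
  unfolding Op_mact by (rule mact_zero)

lemma Op_comm_X:
  assumes g: "g \<in> {E, F, H}" and i: "i \<le> m"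
  shows "Op g (Op (X i) u) r - Op (X i) (Op g u) r = (\<Sum>i'\<le>m. Vrho m g i' i * Op (X i') u r)"
proof (cases "r \<in> Ix")
  case True
  obtain r1 r2 where rr: "r = (r1, r2)" and r1: "r1 \<in> EI a b" and r2: "r2 \<in> EI c d" using True by auto
  have "Op g (Op (X i) u) r - Op (X i) (Op g u) r =
     mact (tm (\<lambda>x y. \<Sum>i'\<le>m. Vrho m g i' i * Erho a b C1 (X i') x y) (\<lambda>x y. \<Sum>i'\<le>m. Vrho m g i' i * Erho c d C2 (X i') x y)) Ix u (r1, r2)"
    unfolding Op_mact rr
    by (rule tm_comm) (auto simp: r1 r2 M2[OF eq1 g i] M2[OF eq2 g i])
  also have "\<dots> = (\<Sum>i'\<le>m. Vrho m g i' i * Op (X i') u r)"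
    unfolding rr Op_mact by (rule mact_tm_lin) (auto simp: r1 r2)
  finally show ?thesis .
next
  case False
  then show ?thesis by (simp add: Op_out)
qed

lemma Op_comm_EF: "Op E (Op F u) r - Op F (Op E u) r = Op H u r"
proof (cases "r \<in> Ix")
  case True
  obtain r1 r2 where rr: "r = (r1, r2)" and r1: "r1 \<in> EI a b" and r2: "r2 \<in> EI c d" using True by auto
  show ?thesis unfolding Op_mact rr
    by (rule tm_comm) (auto simp: r1 r2 M1)
next
  case False
  then show ?thesis by (simp add: Op_out)
qed

lemma Op_H: assumes u: "\<forall>r. r \<notin> Ix \<longrightarrow> u r = 0" shows "Op H u = (\<lambda>r. of_int (wt r) * u r)"
proof
  fix r
  show "Op H u r = of_int (wt r) * u r"
  proof (cases "r \<in> Ix")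
    case True
    obtain r1 r2 where rr: "r = (r1, r2)" and r1: "r1 \<in> EI a b" and r2: "r2 \<in> EI c d" using True by auto
    have s1: "(\<Sum>s1\<in>EI a b. Erho a b C1 H r1 s1 * u (s1, r2)) = of_int (wE a b r1) * u (r1, r2)"
    proof -
      have "(\<Sum>s1\<in>EI a b. Erho a b C1 H r1 s1 * u (s1, r2)) = (\<Sum>s1\<in>EI a b. if r1 = s1 then of_int (wE a b r1) * u (r1, r2) else 0)"
        by (rule sum.cong) (auto simp: Erho_H r1)
      then show ?thesis using r1 by simp
    qed
    have s2: "(\<Sum>s2\<in>EI c d. Erho c d C2 H r2 s2 * u (r1, s2)) = of_int (wE c d r2) * u (r1, r2)"
    proof -
      have "(\<Sum>s2\<in>EI c d. Erho c d C2 H r2 s2 * u (r1, s2)) = (\<Sum>s2\<in>EI c d. if r2 = s2 then of_int (wE c d r2) * u (r1, r2) else 0)"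
        by (rule sum.cong) (auto simp: Erho_H r2)
      then show ?thesis using r2 by simp
    qed
    show ?thesis unfolding rr Op_in[OF r1 r2] s1 s2 by (simp add: Wt_def algebra_simps)
  next
    case False
    then have "u r = 0" using u by blast
    then show ?thesis using False by (simp add: Op_out)
  qed
qed

lemma blk_Op:
  assumes g: "g \<in> {E, F, H}" and u: "\<forall>p. p \<notin> BL \<longrightarrow> u p = 0"
  shows "\<forall>p. p \<notin> BL \<longrightarrow> Op g u p = 0"
proof (intro allI impI)
  fix p assume p: "p \<notin> BL"
  show "Op g u p = 0"
  proof (cases "p \<in> Ix")
    case False then show ?thesis by (simp add: Op_out)
  next
    case True
    obtain p1 p2 where pp: "p = (p1, p2)" and p1: "p1 \<in> EI a b" and p2: "p2 \<in> EI c d" using True by auto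
    have uLL: "u (Inl x, Inl y) = 0" for x y using u by simp
    have uRR: "u (Inr x, Inr y) = 0" for x y using u by simp
    show ?thesis
    proof (cases p1)
      case (Inl x)
      show ?thesis
      proof (cases p2)
        case (Inl y)
        show ?thesis unfolding pp Op_in[OF p1 p2] using g \<open>p1 = Inl x\<close> Inl
          by (auto simp: sum_EI uLL)
      next
        case (Inr y)
        then show ?thesis using p pp \<open>p1 = Inl x\<close> p1 p2 by simp
      qed
    next
      case (Inr x)
      show ?thesis
      proof (cases p2)
        case (Inl y)
        then show ?thesis using p pp \<open>p1 = Inr x\<close> p1 p2 by simp
      next
        case (Inr y)
        show ?thesis unfolding pp Op_in[OF p1 p2] using g \<open>p1 = Inr x\<close> Inr
          by (auto simp: sum_EI uRR)
      qed
    qed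
  qed
qed

lemma SS_supp: "u \<in> SS \<Longrightarrow> r \<notin> Ix \<Longrightarrow> u r = 0"
  using SS_iff BL_Ix by blast

lemma SS_stab: assumes u: "u \<in> SS" and g: "g \<in> {E, F, H}" shows "Op g u \<in> SS"
proof -
  have b: "\<forall>p. p \<notin> BL \<longrightarrow> Op g u p = 0" using blk_Op[OF g] u SS_iff by blast
  have "Op (X i) (Op g u) = (\<lambda>_. 0)" if i: "i \<le> m" for i
  proof
    fix r
    have "Op g (Op (X i) u) r - Op (X i) (Op g u) r = (\<Sum>i'\<le>m. Vrho m g i' i * Op (X i') u r)"
      by (rule Op_comm_X[OF g i])
    moreover have "Op (X i) u = (\<lambda>_. 0)" using u i SS_iff by blast
    moreover have "(\<Sum>i'\<le>m. Vrho m g i' i * Op (X i') u r) = 0"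
      using u SS_iff by (intro sum.neutral) auto
    ultimately show "Op (X i) (Op g u) r = 0" by (simp add: Op_zero)
  qed
  then show ?thesis using b SS_iff by blast
qed

lemma Op_wvec_E: "wvec wt w u \<Longrightarrow> wvec wt (w + 2) (Op E u)"
  unfolding Op_mact by (rule mact_shift[OF _ _ Erho_shift_E Erho_shift_E]) simp_all

lemma Op_wvec_F: assumes h: "wvec wt w u" shows "wvec wt (w - 2) (Op F u)"
proof -
  have "wvec wt (w + (-2)) (Op F u)"
    unfolding Op_mact by (rule mact_shift[OF _ _ Erho_shift_F Erho_shift_F h]) simp_all
  then show ?thesis by simp
qed

lemma Op_X_proj:
  assumes i: "i \<le> m"
  shows "Op (X i) (proj wt w u) = proj wt (w + (int m - 2 * int i)) (Op (X i) u)"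
  unfolding Op_mact
  by (rule mact_proj) (auto intro: Erho_shift_X[OF eq1 i] Erho_shift_X[OF eq2 i])

lemma SS_base: "sl2_base SS (Op E) (Op F) wt Ix"
proof
  show "finite Ix" by simp
next
  fix u r assume "u \<in> SS" "r \<notin> Ix" then show "u r = 0" by (rule SS_supp)
next
  show "(\<lambda>_. 0) \<in> SS" unfolding SS_iff by (simp add: Op_zero)
next
  fix u v assume "u \<in> SS" "v \<in> SS" then show "(\<lambda>r. u r + v r) \<in> SS"
    unfolding SS_iff by (simp add: Op_add)
next
  fix u t assume "u \<in> SS" then show "(\<lambda>r. t * u r) \<in> SS"
    unfolding SS_iff by (simp add: Op_sc)
next
  fix u assume "u \<in> SS" then show "Op E u \<in> SS" by (rule SS_stab) simp
next
  fix u assume "u \<in> SS" then show "Op F u \<in> SS" by (rule SS_stab) simp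
next
  fix u v :: "(nat + nat) \<times> (nat + nat) \<Rightarrow> 'k" show "Op E (\<lambda>r. u r + v r) = (\<lambda>r. Op E u r + Op E v r)" by (rule Op_add)
next
  fix u :: "(nat + nat) \<times> (nat + nat) \<Rightarrow> 'k" and t show "Op E (\<lambda>r. t * u r) = (\<lambda>r. t * Op E u r)" by (rule Op_sc)
next
  fix u v :: "(nat + nat) \<times> (nat + nat) \<Rightarrow> 'k" show "Op F (\<lambda>r. u r + v r) = (\<lambda>r. Op F u r + Op F v r)" by (rule Op_add)
next
  fix u :: "(nat + nat) \<times> (nat + nat) \<Rightarrow> 'k" and t show "Op F (\<lambda>r. t * u r) = (\<lambda>r. t * Op F u r)" by (rule Op_sc)
next
  fix u :: "(nat + nat) \<times> (nat + nat) \<Rightarrow> 'k" and w assume "wvec wt w u" then show "wvec wt (w + 2) (Op E u)" by (rule Op_wvec_E)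
next
  fix u :: "(nat + nat) \<times> (nat + nat) \<Rightarrow> 'k" and w assume "wvec wt w u" then show "wvec wt (w - 2) (Op F u)" by (rule Op_wvec_F)
next
  fix u w r assume u: "u \<in> SS" and w: "wvec wt w u"
  have "Op E (Op F u) r - Op F (Op E u) r = Op H u r" by (rule Op_comm_EF)
  also have "\<dots> = of_int (wt r) * u r" using Op_H SS_supp[OF u] by simp
  also have "\<dots> = of_int w * u r"
  proof (cases "u r = 0")
    case False then have "wt r = w" using w unfolding wvec_def by blast
    then show ?thesis by simp
  qed simp
  finally show "Op E (Op F u) r = Op F (Op E u) r + of_int w * u r" by (simp add: algebra_simps)
next
  fix u w assume u: "u \<in> SS"
  have "\<forall>p. p \<notin> BL \<longrightarrow> proj wt w u p = 0" using u SS_iff unfolding proj_def by auto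
  moreover have "Op (X i) (proj wt w u) = (\<lambda>_. 0)" if "i \<le> m" for i
    using Op_X_proj[OF that] u SS_iff that unfolding proj_def by auto
  ultimately show "proj wt w u \<in> SS" unfolding SS_iff by blast
qed

end


lemma key_arith:
  assumes "p \<le> a"
  shows "(if p < a then of_nat (Suc p * (a - p)) else 0) - (if 1 \<le> p then of_nat (p * (a - p + 1)) else 0)
     = (of_int (int a - 2 * int p) :: 'k::field_char_0)"
proof -
  have pa: "int (a - p) = int a - int p" using assms by (simp add: of_nat_diff)
  have h1: "int (Suc p * (a - p)) = (int p + 1) * (int a - int p)"
    by (simp only: of_nat_mult pa) simp
  have h2: "int (p * (a - p + 1)) = int p * (int a - int p + 1)"
    by (simp only: of_nat_mult of_nat_add pa) simp
  have key: "(if p < a then int (Suc p * (a - p)) else 0) - (if 1 \<le> p then int (p * (a - p + 1)) else 0) = int a - 2 * int p"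
    unfolding h1 h2 using assms by (cases "p = 0"; cases "p < a") (simp_all add: algebra_simps)
  have "(if p < a then of_nat (Suc p * (a - p)) else 0) - (if 1 \<le> p then of_nat (p * (a - p + 1)) else 0)
     = (of_int ((if p < a then int (Suc p * (a - p)) else 0) - (if 1 \<le> p then int (p * (a - p + 1)) else 0)) :: 'k)"
    by simp
  then show ?thesis unfolding key .
qed

abbreviation "VE e \<equiv> act (Vrho e) {..e} E"
abbreviation "VF e \<equiv> act (Vrho e) {..e} F"
abbreviation "VH e \<equiv> act (Vrho e) {..e} H"

lemma VE_eq: "VE e v = (\<lambda>r. if r < e then of_nat (Suc r * (e - r)) * v (Suc r) else 0)"
  unfolding act_def by (simp add: sum_VE)
lemma VF_eq: "VF e v = (\<lambda>r. if 1 \<le> r \<and> r \<le> e then v (r - 1) else 0)"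
  unfolding act_def by (simp add: sum_VF)
lemma VH_eq: "VH e v = (\<lambda>r. if r \<le> e then of_int (int e - 2 * int r) * v r else 0)"
  unfolding act_def by (simp add: sum_VH)

definition zV :: "nat \<Rightarrow> nat \<Rightarrow> 'k::field_char_0" where "zV e = (\<lambda>r. if r = e then 1 else 0)"

lemma V_lw: "sl2_lw (Vsp e :: (nat \<Rightarrow> 'k::field_char_0) set) (VE e) (VF e) (\<lambda>r. int e - 2 * int r) {..e} e (zV e)"
proof (unfold_locales)
  show "finite {..e}" by simp
next
  fix u :: "nat \<Rightarrow> 'k" and r assume "u \<in> Vsp e" "r \<notin> {..e}" then show "u r = 0" unfolding Vsp_def by simp
next
  show "(\<lambda>_. 0) \<in> (Vsp e :: (nat \<Rightarrow> 'k) set)" unfolding Vsp_def by simp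
next
  fix u v :: "nat \<Rightarrow> 'k" assume "u \<in> Vsp e" "v \<in> Vsp e" then show "(\<lambda>r. u r + v r) \<in> Vsp e" unfolding Vsp_def by simp
next
  fix u :: "nat \<Rightarrow> 'k" and t assume "u \<in> Vsp e" then show "(\<lambda>r. t * u r) \<in> Vsp e" unfolding Vsp_def by simp
next
  fix u :: "nat \<Rightarrow> 'k" show "VE e u \<in> Vsp e" unfolding Vsp_def VE_eq by simp
next
  fix u :: "nat \<Rightarrow> 'k" show "VF e u \<in> Vsp e" unfolding Vsp_def VF_eq by simp
next
  fix u v :: "nat \<Rightarrow> 'k" show "VE e (\<lambda>r. u r + v r) = (\<lambda>r. VE e u r + VE e v r)"
    unfolding VE_eq by (simp add: fun_eq_iff algebra_simps)
next
  fix u :: "nat \<Rightarrow> 'k" and t show "VE e (\<lambda>r. t * u r) = (\<lambda>r. t * VE e u r)"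
    unfolding VE_eq by (simp add: fun_eq_iff algebra_simps)
next
  fix u v :: "nat \<Rightarrow> 'k" show "VF e (\<lambda>r. u r + v r) = (\<lambda>r. VF e u r + VF e v r)"
    unfolding VF_eq by (simp add: fun_eq_iff algebra_simps)
next
  fix u :: "nat \<Rightarrow> 'k" and t show "VF e (\<lambda>r. t * u r) = (\<lambda>r. t * VF e u r)"
    unfolding VF_eq by (simp add: fun_eq_iff algebra_simps)
next
  fix u :: "nat \<Rightarrow> 'k" and w assume "wvec (\<lambda>r. int e - 2 * int r) w u"
  then show "wvec (\<lambda>r. int e - 2 * int r) (w + 2) (VE e u)"
    unfolding wvec_def VE_eq by (auto split: if_splits)
next
  fix u :: "nat \<Rightarrow> 'k" and w assume "wvec (\<lambda>r. int e - 2 * int r) w u"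
  then show "wvec (\<lambda>r. int e - 2 * int r) (w - 2) (VF e u)"
    unfolding wvec_def VF_eq by (auto split: if_splits simp: of_nat_diff)
next
  fix u :: "nat \<Rightarrow> 'k" and w r assume u: "u \<in> Vsp e" and w: "wvec (\<lambda>r. int e - 2 * int r) w u"
  show "VE e (VF e u) r = VF e (VE e u) r + of_int w * u r"
  proof (cases "r \<le> e")
    case True
    define P :: 'k where "P = (if r < e then of_nat (Suc r * (e - r)) else 0)"
    define Q :: 'k where "Q = (if 1 \<le> r then of_nat (r * (e - r + 1)) else 0)"
    have PQ: "P - Q = of_int (int e - 2 * int r)" unfolding P_def Q_def by (rule key_arith[OF True])
    have e1: "VE e (VF e u) r = P * u r"
      unfolding VE_eq VF_eq P_def by simp
    have e2: "VF e (VE e u) r = Q * u r"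
      unfolding VE_eq VF_eq Q_def using True by (auto simp: Suc_diff_le)
    have h3: "of_int w * u r = (P - Q) * u r"
    proof (cases "u r = 0")
      case False then have "int e - 2 * int r = w" using w unfolding wvec_def by blast
      then show ?thesis using PQ by simp
    qed simp
    show ?thesis unfolding e1 e2 h3 by (simp add: left_diff_distrib)
  next
    case False
    then have "u r = 0" using u unfolding Vsp_def by simp
    then show ?thesis using False unfolding VE_eq VF_eq by simp
  qed
next
  fix u :: "nat \<Rightarrow> 'k" and w assume "u \<in> Vsp e"
  then show "proj (\<lambda>r. int e - 2 * int r) w u \<in> Vsp e" unfolding Vsp_def proj_def by simp
next
  show "zV e \<in> (Vsp e :: (nat \<Rightarrow> 'k) set)" unfolding Vsp_def zV_def by simp
next
  show "zV e \<noteq> (\<lambda>_. 0 :: 'k)" unfolding zV_def by (metis one_neq_zero)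
next
  show "wvec (\<lambda>r. int e - 2 * int r) (- int e) (zV e :: nat \<Rightarrow> 'k)" unfolding wvec_def zV_def by auto
next
  show "VF e (zV e) = (\<lambda>_. 0 :: 'k)" unfolding VF_eq zV_def by (rule ext) auto
next
  fix u :: "nat \<Rightarrow> 'k" assume u: "u \<in> Vsp e" and F0: "VF e u = (\<lambda>_. 0)"
  have "u = (\<lambda>r. u e * zV e r)"
  proof
    fix r
    show "u r = u e * zV e r"
    proof (cases "r < e")
      case True
      have "VF e u (Suc r) = 0" using F0 by simp
      then have "u r = 0" using True unfolding VF_eq by simp
      then show ?thesis using True unfolding zV_def by simp
    next
      case False
      then show ?thesis using u unfolding Vsp_def zV_def by (cases "r = e") auto
    qed
  qed
  then show "\<exists>t. u = (\<lambda>r. t * zV e r)" by blast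
qed


lemma row_lemma:
  fixes v :: "nat \<Rightarrow> nat \<Rightarrow> 'k::field"
  assumes F: "\<And>p q. p \<le> A \<Longrightarrow> q \<le> B \<Longrightarrow> (if 1 \<le> p then v (p - 1) q else 0) + (if 1 \<le> q then v p (q - 1) else 0) = 0"
    and top: "\<And>p. 1 \<le> p \<Longrightarrow> p \<le> A \<Longrightarrow> v p B = 0"
  shows "\<And>p q. p \<le> A \<Longrightarrow> q \<le> B \<Longrightarrow> v p q = (if p + q = B then (-1) ^ p * v 0 B else 0)"
    and "B < A \<Longrightarrow> v 0 B = 0"
proof -
  have main: "\<forall>q p. q \<le> B \<longrightarrow> B - q = k \<longrightarrow> p \<le> A \<longrightarrow> v p q = (if p + q = B then (-1) ^ p * v 0 B else 0)" for k
  proof (induction k)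
    case 0
    show ?case
    proof (intro allI impI)
      fix q p assume "q \<le> B" "B - q = 0" "p \<le> A"
      then have q: "q = B" by simp
      show "v p q = (if p + q = B then (-1) ^ p * v 0 B else 0)"
        using top[of p] \<open>p \<le> A\<close> q by (cases "p = 0") auto
    qed
  next
    case (Suc k)
    show ?case
    proof (intro allI impI)
      fix q p assume q: "q \<le> B" "B - q = Suc k" and p: "p \<le> A"
      have q1: "Suc q \<le> B" "B - Suc q = k" using q by auto
      have "(if 1 \<le> p then v (p - 1) (Suc q) else 0) + v p q = 0" using F[OF p q1(1)] by simp
      then have vpq: "v p q = - (if 1 \<le> p then v (p - 1) (Suc q) else 0)" by (simp add: eq_neg_iff_add_eq_0 add.commute)
      show "v p q = (if p + q = B then (-1) ^ p * v 0 B else 0)"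
      proof (cases "p = 0")
        case True then show ?thesis using vpq q by (cases "q = B") auto
      next
        case False
        then have "v (p - 1) (Suc q) = (if p - 1 + Suc q = B then (-1) ^ (p - 1) * v 0 B else 0)"
          using Suc.IH q1 p by auto
        moreover have "p - 1 + Suc q = p + q" using False by simp
        moreover have "(-1::'k) ^ p = - ((-1) ^ (p - 1))" using False by (cases p) auto
        ultimately show ?thesis using vpq False by simp
      qed
    qed
  qed
  show v: "\<And>p q. p \<le> A \<Longrightarrow> q \<le> B \<Longrightarrow> v p q = (if p + q = B then (-1) ^ p * v 0 B else 0)"
    using main by blast
  show "B < A \<Longrightarrow> v 0 B = 0"
  proof -
    assume BA: "B < A"
    have "(if 1 \<le> Suc B then v (Suc B - 1) 0 else 0) + (if 1 \<le> (0::nat) then v (Suc B) (0 - 1) else 0) = 0"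
      using F[of "Suc B" 0] BA by simp
    then have "v B 0 = 0" by simp
    moreover have "v B 0 = (-1) ^ B * v 0 B" using v[of B 0] BA by simp
    ultimately show "v 0 B = 0" by simp
  qed
qed

lemma col_lemma:
  fixes v :: "nat \<Rightarrow> nat \<Rightarrow> 'k::field"
  assumes F: "\<And>p q. p \<le> A \<Longrightarrow> q \<le> B \<Longrightarrow> (if 1 \<le> p then v (p - 1) q else 0) + (if 1 \<le> q then v p (q - 1) else 0) = 0"
    and side: "\<And>q. 1 \<le> q \<Longrightarrow> q \<le> B \<Longrightarrow> v A q = 0"
  shows "\<And>p q. p \<le> A \<Longrightarrow> q \<le> B \<Longrightarrow> v p q = (if p + q = A then (-1) ^ q * v A 0 else 0)"
    and "A < B \<Longrightarrow> v A 0 = 0"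
proof -
  have F': "(if 1 \<le> p then (\<lambda>p q. v q p) (p - 1) q else 0) + (if 1 \<le> q then (\<lambda>p q. v q p) p (q - 1) else 0) = 0"
    if "p \<le> B" "q \<le> A" for p q
    using F[of q p] that by (simp add: add.commute)
  note R = row_lemma[of B A "\<lambda>p q. v q p", OF F' side]
  show "\<And>p q. p \<le> A \<Longrightarrow> q \<le> B \<Longrightarrow> v p q = (if p + q = A then (-1) ^ q * v A 0 else 0)"
    using R(1) by (simp add: add.commute)
  show "A < B \<Longrightarrow> v A 0 = 0" using R(2) by simp
qed

lemma chain_lemma:
  fixes g :: "nat \<Rightarrow> 'k::field"
  assumes rel: "\<And>k. k < n \<Longrightarrow> \<alpha> k * g k = \<beta> k * g (Suc k)"
    and a: "\<And>k. k < n \<Longrightarrow> \<alpha> k \<noteq> 0" and b: "\<And>k. k < n \<Longrightarrow> \<beta> k \<noteq> 0"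
    and ex: "\<exists>k\<le>n. g k \<noteq> 0"
  shows "k \<le> n \<Longrightarrow> g k \<noteq> 0"
proof (rule ccontr)
  assume k: "k \<le> n" and "\<not> g k \<noteq> 0"
  then have gk: "g k = 0" by simp
  have up: "g (k + j) = 0" if "k + j \<le> n" for j
    using that
  proof (induction j)
    case 0 then show ?case using gk by simp
  next
    case (Suc j)
    then have "g (k + j) = 0" by simp
    then have "\<beta> (k + j) * g (Suc (k + j)) = 0" using rel[of "k + j"] Suc.prems by simp
    then show ?case using b[of "k + j"] Suc.prems by simp
  qed
  have down: "g (k - j) = 0" if "j \<le> k" for j
    using that
  proof (induction j)
    case 0 then show ?case using gk by simp
  next
    case (Suc j)
    then have g1: "g (Suc (k - Suc j)) = 0" using Suc_diff_Suc[of j k] by simp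
    have "k - Suc j < n" using Suc.prems k by simp
    then have "\<alpha> (k - Suc j) * g (k - Suc j) = 0" using rel[of "k - Suc j"] g1 by simp
    then show ?case using a[of "k - Suc j"] \<open>k - Suc j < n\<close> by simp
  qed
  obtain k' where k': "k' \<le> n" "g k' \<noteq> 0" using ex by blast
  show False
  proof (cases "k \<le> k'")
    case True then show False using up[of "k' - k"] k' by simp
  next
    case False then show False using down[of "k - k'"] k' by simp
  qed
qed

lemma equiv_F:
  assumes "equivariant m b a C" "i \<le> m" "j \<le> b" "k \<le> a"
  shows "(if i < m then C (Suc i) j k else 0) + (if j < b then C i (Suc j) k else 0) = (if 1 \<le> k then C i j (k - 1) else 0)"
proof -
  have "(\<Sum>i'\<le>m. Vrho m F i' i * C i' j k) + (\<Sum>j'\<le>b. Vrho b F j' j * C i j' k) = (\<Sum>k'\<le>a. Vrho a F k k' * C i j k')"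
    using assms unfolding equivariant_def by blast
  then show ?thesis using assms by (simp add: csum_VF sum_VF)
qed

lemma equiv_E0:
  assumes "equivariant m b a C" "j \<le> b" "k \<le> a"
  shows "(if 1 \<le> j then of_nat (j * (b - j + 1)) * C 0 (j - 1) k else 0) = (if k < a then of_nat (Suc k * (a - k)) * C 0 j (Suc k) else 0)"
proof -
  have "(\<Sum>i'\<le>m. Vrho m E i' 0 * C i' j k) + (\<Sum>j'\<le>b. Vrho b E j' j * C 0 j' k) = (\<Sum>k'\<le>a. Vrho a E k k' * C 0 j k')"
    using assms unfolding equivariant_def by blast
  then show ?thesis using assms by (simp add: csum_VE sum_VE)
qed

lemma allzero:
  assumes eqv: "equivariant m b a (C :: nat \<Rightarrow> nat \<Rightarrow> nat \<Rightarrow> 'k::field_char_0)" and z: "\<forall>j\<le>b. \<forall>k\<le>a. C 0 j k = 0"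
  shows "\<forall>i\<le>m. \<forall>j\<le>b. \<forall>k\<le>a. C i j k = 0"
proof -
  have "i \<le> m \<Longrightarrow> \<forall>j\<le>b. \<forall>k\<le>a. C i j k = 0" for i
  proof (induction i)
    case 0 then show ?case using z by simp
  next
    case (Suc i)
    show ?case
    proof (intro allI impI)
      fix j k assume j: "j \<le> b" and k: "k \<le> a"
      have "(if i < m then C (Suc i) j k else 0) + (if j < b then C i (Suc j) k else 0) = (if 1 \<le> k then C i j (k - 1) else 0)"
        using equiv_F[OF eqv _ j k, of i] Suc.prems by simp
      moreover have "(if j < b then C i (Suc j) k else 0) = 0" using Suc j k by auto
      moreover have "(if 1 \<le> k then C i j (k - 1) else 0) = 0" using Suc j k by auto
      ultimately show "C (Suc i) j k = 0" using Suc.prems by simp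
    qed
  qed
  then show ?thesis by blast
qed

lemma C0_nz:
  assumes "equivariant m b a (C :: nat \<Rightarrow> nat \<Rightarrow> nat \<Rightarrow> 'k::field_char_0)" "nonzero_map m b a C"
  shows "\<exists>j\<le>b. \<exists>k\<le>a. C 0 j k \<noteq> 0"
  using allzero[OF assms(1)] assms(2) unfolding nonzero_map_def by blast

lemma C0_wt:
  assumes "equivariant m b a (C :: nat \<Rightarrow> nat \<Rightarrow> nat \<Rightarrow> 'k::field_char_0)" "j \<le> b" "k \<le> a" "C 0 j k \<noteq> 0"
  shows "int m + int b - 2 * int j = int a - 2 * int k"
  using equiv_H[OF assms(1) le0 assms(2,3) assms(4)] by simp

lemma sum_C0:
  assumes "equivariant m b a (C :: nat \<Rightarrow> nat \<Rightarrow> nat \<Rightarrow> 'k::field_char_0)" "k \<le> a"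
    and "\<And>j. j \<le> b \<Longrightarrow> int m + int b - 2 * int j = int a - 2 * int k \<Longrightarrow> j = j0"
  shows "(\<Sum>j\<le>b. C 0 j k * f j) = (if j0 \<le> b then C 0 j0 k * f j0 else 0)"
proof -
  have "(\<Sum>j\<le>b. C 0 j k * f j) = (\<Sum>j\<le>b. if j = j0 then C 0 j0 k * f j0 else 0)"
  proof (rule sum.cong)
    fix j assume j: "j \<in> {..b}"
    show "C 0 j k * f j = (if j = j0 then C 0 j0 k * f j0 else 0)"
    proof (cases "C 0 j k = 0")
      case False
      then have "j = j0" using C0_wt[OF assms(1) _ assms(2) False] assms(3) j by simp
      then show ?thesis by simp
    qed auto
  qed simp
  then show ?thesis by simp
qed

lemma top_C0:
  assumes eqv: "equivariant m b a (C :: nat \<Rightarrow> nat \<Rightarrow> nat \<Rightarrow> 'k::field_char_0)" and nz: "nonzero_map m b a C"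
    and ab: "a + b = m"
  shows "C 0 b 0 \<noteq> 0"
    and "\<And>k f. k \<le> a \<Longrightarrow> (\<Sum>j\<le>b. C 0 j k * f j) = (if k = 0 then C 0 b 0 * f b else 0)"
proof -
  have w: "j = b \<and> k = 0" if "j \<le> b" "k \<le> a" "int m + int b - 2 * int j = int a - 2 * int k" for j k
    using that ab by linarith
  obtain j k where jk: "j \<le> b" "k \<le> a" "C 0 j k \<noteq> 0" using C0_nz[OF eqv nz] by blast
  then show "C 0 b 0 \<noteq> 0" using w C0_wt[OF eqv jk] by blast
  fix k :: nat and f :: "nat \<Rightarrow> 'k" assume k: "k \<le> a"
  have "(\<Sum>j\<le>b. C 0 j k * f j) = (if b \<le> b then C 0 b k * f b else 0)"
    by (rule sum_C0[OF eqv k]) (use w k in blast)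
  also have "\<dots> = (if k = 0 then C 0 b 0 * f b else 0)"
  proof (cases "k = 0")
    case False
    then have "C 0 b k = 0" using w[of b k] C0_wt[OF eqv _ k, of b] k by (cases "C 0 b k = 0") auto
    then show ?thesis using False by simp
  qed simp
  finally show "(\<Sum>j\<le>b. C 0 j k * f j) = (if k = 0 then C 0 b 0 * f b else 0)" .
qed


lemma neg1_pow: "1 \<le> p \<Longrightarrow> (-1::'k::field) ^ p = - ((-1) ^ (p - 1))"
  by (cases p) auto

lemma row_lemma_H:
  fixes v :: "nat \<Rightarrow> nat \<Rightarrow> 'k::field"
  assumes F: "\<forall>p q. p \<le> A \<longrightarrow> q \<le> B \<longrightarrow> (if 1 \<le> p then v (p - 1) q else 0) + (if 1 \<le> q then v p (q - 1) else 0) = 0"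
    and top: "\<forall>p. 1 \<le> p \<longrightarrow> p \<le> A \<longrightarrow> v p B = 0"
  shows "\<forall>p q. p \<le> A \<longrightarrow> q \<le> B \<longrightarrow> v p q = (if p + q = B then (-1) ^ p * v 0 B else 0)"
    and "B < A \<longrightarrow> v 0 B = 0"
proof -
  have F': "(if 1 \<le> p then v (p - 1) q else 0) + (if 1 \<le> q then v p (q - 1) else 0) = 0" if "p \<le> A" "q \<le> B" for p q
    using F that by blast
  have top': "v p B = 0" if "1 \<le> p" "p \<le> A" for p using top that by blast
  show "\<forall>p q. p \<le> A \<longrightarrow> q \<le> B \<longrightarrow> v p q = (if p + q = B then (-1) ^ p * v 0 B else 0)"
    using row_lemma(1)[of A B v, OF F' top'] by blast
  show "B < A \<longrightarrow> v 0 B = 0"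
    using row_lemma(2)[of A B v, OF F' top'] by blast
qed

lemma col_lemma_H:
  fixes v :: "nat \<Rightarrow> nat \<Rightarrow> 'k::field"
  assumes F: "\<forall>p q. p \<le> A \<longrightarrow> q \<le> B \<longrightarrow> (if 1 \<le> p then v (p - 1) q else 0) + (if 1 \<le> q then v p (q - 1) else 0) = 0"
    and side: "\<forall>q. 1 \<le> q \<longrightarrow> q \<le> B \<longrightarrow> v A q = 0"
  shows "\<forall>p q. p \<le> A \<longrightarrow> q \<le> B \<longrightarrow> v p q = (if p + q = A then (-1) ^ q * v A 0 else 0)"
    and "A < B \<longrightarrow> v A 0 = 0"
proof -
  have F': "(if 1 \<le> p then v (p - 1) q else 0) + (if 1 \<le> q then v p (q - 1) else 0) = 0" if "p \<le> A" "q \<le> B" for p q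
    using F that by blast
  have side': "v A q = 0" if "1 \<le> q" "q \<le> B" for q using side that by blast
  show "\<forall>p q. p \<le> A \<longrightarrow> q \<le> B \<longrightarrow> v p q = (if p + q = A then (-1) ^ q * v A 0 else 0)"
    using col_lemma(1)[of A B v, OF F' side'] by blast
  show "A < B \<longrightarrow> v A 0 = 0"
    using col_lemma(2)[of A B v, OF F' side'] by blast
qed

context conc
begin

lemma X0_LL: "p \<le> a \<Longrightarrow> q \<le> c \<Longrightarrow> Op (X 0) u (Inl p, Inl q) =
   (\<Sum>j\<le>b. C1 0 j p * u (Inr j, Inl q)) + (\<Sum>j\<le>d. C2 0 j q * u (Inl p, Inr j))"
  by (simp add: Op_in sum_EI)

lemma F_LR: "p \<le> a \<Longrightarrow> q \<le> d \<Longrightarrow> Op F u (Inl p, Inr q) =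
   (if 1 \<le> p then u (Inl (p - 1), Inr q) else 0) + (if 1 \<le> q then u (Inl p, Inr (q - 1)) else 0)"
  by (simp add: Op_in sum_EI sum_VF)

lemma F_RL: "p \<le> b \<Longrightarrow> q \<le> c \<Longrightarrow> Op F u (Inr p, Inl q) =
   (if 1 \<le> p then u (Inr (p - 1), Inl q) else 0) + (if 1 \<le> q then u (Inr p, Inl (q - 1)) else 0)"
  by (simp add: Op_in sum_EI sum_VF)

lemma X_blk:
  assumes u: "\<forall>p. p \<notin> BL \<longrightarrow> u p = 0" and r: "\<forall>x y. r \<noteq> (Inl x, Inl y)"
  shows "Op (X i) u r = 0"
proof (cases "r \<in> Ix")
  case False then show ?thesis by (simp add: Op_out)
next
  case True
  obtain r1 r2 where rr: "r = (r1, r2)" and r1: "r1 \<in> EI a b" and r2: "r2 \<in> EI c d" using True by auto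
  have uLL: "u (Inl x, Inl y) = 0" for x y using u by simp
  have uRR: "u (Inr x, Inr y) = 0" for x y using u by simp
  show ?thesis
  proof (cases r1)
    case (Inl x)
    then obtain y where "r2 = Inr y" using r rr by (cases r2) auto
    then show ?thesis unfolding rr Op_in[OF r1 r2] using Inl by (simp add: sum_EI uRR)
  next
    case (Inr x)
    then show ?thesis unfolding rr Op_in[OF r1 r2] by (cases r2) (simp_all add: sum_EI uLL uRR)
  qed
qed

lemma SS_F_eqs:
  assumes u: "u \<in> SS" and Fu: "Op F u = (\<lambda>_. 0)"
  shows "\<And>p q. p \<le> a \<Longrightarrow> q \<le> d \<Longrightarrow> (if 1 \<le> p then u (Inl (p - 1), Inr q) else 0) + (if 1 \<le> q then u (Inl p, Inr (q - 1)) else 0) = 0"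
    and "\<And>p q. p \<le> b \<Longrightarrow> q \<le> c \<Longrightarrow> (if 1 \<le> p then u (Inr (p - 1), Inl q) else 0) + (if 1 \<le> q then u (Inr p, Inl (q - 1)) else 0) = 0"
    and "\<And>p q. p \<le> a \<Longrightarrow> q \<le> c \<Longrightarrow> Op (X 0) u (Inl p, Inl q) = 0"
proof -
  fix p q
  show "p \<le> a \<Longrightarrow> q \<le> d \<Longrightarrow> (if 1 \<le> p then u (Inl (p - 1), Inr q) else 0) + (if 1 \<le> q then u (Inl p, Inr (q - 1)) else 0) = 0"
    using F_LR[of p q u] Fu by simp
  show "p \<le> b \<Longrightarrow> q \<le> c \<Longrightarrow> (if 1 \<le> p then u (Inr (p - 1), Inl q) else 0) + (if 1 \<le> q then u (Inr p, Inl (q - 1)) else 0) = 0"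
    using F_RL[of p q u] Fu by simp
  show "p \<le> a \<Longrightarrow> q \<le> c \<Longrightarrow> Op (X 0) u (Inl p, Inl q) = 0"
    using u SS_iff by auto
qed

lemma fun_eq_blocks:
  assumes u: "\<forall>p. p \<notin> BL \<longrightarrow> u p = 0" and v: "\<forall>p. p \<notin> BL \<longrightarrow> v p = 0"
    and LR: "\<And>p q. p \<le> a \<Longrightarrow> q \<le> d \<Longrightarrow> u (Inl p, Inr q) = v (Inl p, Inr q)"
    and RL: "\<And>p q. p \<le> b \<Longrightarrow> q \<le> c \<Longrightarrow> u (Inr p, Inl q) = v (Inr p, Inl q)"
  shows "u = v"
proof
  fix r
  show "u r = v r"
  proof (cases "r \<in> BL")
    case False
    then have "u r = 0" "v r = 0" using u v by blast+
    then show ?thesis by simp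
  next
    case True
    then show ?thesis unfolding BL_def using LR RL by auto
  qed
qed

end

locale conc_cd = conc m a b c d C1 C2
  for m a b c d and C1 C2 :: "nat \<Rightarrow> nat \<Rightarrow> nat \<Rightarrow> 'k::field_char_0" +
  assumes ab: "a + b = m" and cd: "c + d = m"
    and nz1: "nonzero_map m b a C1" and nz2: "nonzero_map m d c C2"
begin


lemma rho_nz: "(C1 0 b 0) \<noteq> 0" using top_C0(1)[OF eq1 nz1 ab] .
lemma gamma_nz: "(C2 0 d 0) \<noteq> 0" using top_C0(1)[OF eq2 nz2 cd] .

lemma X0_form: "p \<le> a \<Longrightarrow> q \<le> c \<Longrightarrow> Op (X 0) u (Inl p, Inl q) =
   (if p = 0 then (C1 0 b 0) * u (Inr b, Inl q) else 0) + (if q = 0 then (C2 0 d 0) * u (Inl p, Inr d) else 0)"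
  unfolding X0_LL using top_C0(2)[OF eq1 nz1 ab] top_C0(2)[OF eq2 nz2 cd] by simp

definition zz :: "(nat + nat) \<times> (nat + nat) \<Rightarrow> 'k" where
  "zz r = (case r of (Inl p, Inr q) \<Rightarrow> if p \<le> a \<and> q \<le> d \<and> p + q = d then (-1) ^ p else 0
     | (Inr p, Inl q) \<Rightarrow> if p \<le> b \<and> q \<le> c \<and> p + q = b then - ((C2 0 d 0) / (C1 0 b 0)) * (-1) ^ q else 0
     | _ \<Rightarrow> 0)"

lemma zz_simps[simp]:
  "zz (Inl p, Inr q) = (if p \<le> a \<and> q \<le> d \<and> p + q = d then (-1) ^ p else 0)"
  "zz (Inr p, Inl q) = (if p \<le> b \<and> q \<le> c \<and> p + q = b then - ((C2 0 d 0) / (C1 0 b 0)) * (-1) ^ q else 0)"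
  "zz (Inl p, Inl q) = 0"
  "zz (Inr p, Inr q) = 0"
  unfolding zz_def by simp_all

lemma zz_blk: "\<forall>p. p \<notin> BL \<longrightarrow> zz p = 0"
proof (intro allI impI)
  fix p assume pn: "p \<notin> BL"
  obtain x y where p: "p = (x, y)" by (cases p)
  show "zz p = 0" using pn unfolding p by (cases x; cases y) auto
qed

lemma K_cd:
  assumes u: "u \<in> SS" and Fu: "Op F u = (\<lambda>_. 0)"
  shows "u = (\<lambda>r. u (Inl 0, Inr d) * zz r)" and "d < a \<Longrightarrow> u = (\<lambda>_. 0)"
proof -
  define t where "t = u (Inl 0, Inr d)"
  define s where "s = u (Inr b, Inl 0)"
  note E = SS_F_eqs[OF u Fu]
  have ublk: "\<forall>p. p \<notin> BL \<longrightarrow> u p = 0" using u SS_iff by blast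
  have top1: "u (Inl p, Inr d) = 0" if "1 \<le> p" "p \<le> a" for p
  proof -
    have "Op (X 0) u (Inl p, Inl 0) = 0" using E(3)[of p 0] that by simp
    moreover have "Op (X 0) u (Inl p, Inl 0) = C2 0 d 0 * u (Inl p, Inr d)"
      using X0_form[of p 0 u] that by simp
    ultimately show ?thesis using gamma_nz by simp
  qed
  have side2: "u (Inr b, Inl q) = 0" if "1 \<le> q" "q \<le> c" for q
  proof -
    have "Op (X 0) u (Inl 0, Inl q) = 0" using E(3)[of 0 q] that by simp
    moreover have "Op (X 0) u (Inl 0, Inl q) = C1 0 b 0 * u (Inr b, Inl q)"
      using X0_form[of 0 q u] that by simp
    ultimately show ?thesis using rho_nz by simp
  qed
  have link: "C1 0 b 0 * s + C2 0 d 0 * t = 0"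
  proof -
    have "Op (X 0) u (Inl 0, Inl 0) = 0" using E(3)[of 0 0] by simp
    moreover have "Op (X 0) u (Inl 0, Inl 0) = C1 0 b 0 * s + C2 0 d 0 * t"
      using X0_form[of 0 0 u] unfolding s_def t_def by simp
    ultimately show ?thesis by simp
  qed
  have E1: "\<forall>p q. p \<le> a \<longrightarrow> q \<le> d \<longrightarrow> (if 1 \<le> p then u (Inl (p - 1), Inr q) else 0) + (if 1 \<le> q then u (Inl p, Inr (q - 1)) else 0) = 0"
    using E(1) by blast
  have E2: "\<forall>p q. p \<le> b \<longrightarrow> q \<le> c \<longrightarrow> (if 1 \<le> p then u (Inr (p - 1), Inl q) else 0) + (if 1 \<le> q then u (Inr p, Inl (q - 1)) else 0) = 0"
    using E(2) by blast
  have T1: "\<forall>p. 1 \<le> p \<longrightarrow> p \<le> a \<longrightarrow> u (Inl p, Inr d) = 0" using top1 by blast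
  have S2: "\<forall>q. 1 \<le> q \<longrightarrow> q \<le> c \<longrightarrow> u (Inr b, Inl q) = 0" using side2 by blast
  note R = row_lemma_H[of a d "\<lambda>p q. u (Inl p, Inr q)", OF E1 T1]
  note Cc = col_lemma_H[of b c "\<lambda>p q. u (Inr p, Inl q)", OF E2 S2]
  have "C1 0 b 0 * s = - (C2 0 d 0 * t)" using link by (simp add: eq_neg_iff_add_eq_0)
  then have sv: "s = - (C2 0 d 0 / C1 0 b 0) * t" using rho_nz by (simp add: field_simps)
  show eq: "u = (\<lambda>r. u (Inl 0, Inr d) * zz r)"
  proof (rule fun_eq_blocks[OF ublk])
    show "\<forall>p. p \<notin> BL \<longrightarrow> u (Inl 0, Inr d) * zz p = 0"
    proof (intro allI impI)
      fix p assume "p \<notin> BL"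
      then have "zz p = 0" using zz_blk by blast
      then show "u (Inl 0, Inr d) * zz p = 0" by simp
    qed
  next
    fix p q assume pq: "p \<le> a" "q \<le> d"
    have "u (Inl p, Inr q) = (if p + q = d then (-1) ^ p * t else 0)" using R(1) pq unfolding t_def by blast
    also have "\<dots> = t * zz (Inl p, Inr q)" using pq by (simp add: mult.commute)
    finally show "u (Inl p, Inr q) = u (Inl 0, Inr d) * zz (Inl p, Inr q)" unfolding t_def .
  next
    fix p q assume pq: "p \<le> b" "q \<le> c"
    have "u (Inr p, Inl q) = (if p + q = b then (-1) ^ q * s else 0)" using Cc(1) pq unfolding s_def by blast
    also have "\<dots> = t * zz (Inr p, Inl q)" using pq unfolding sv by (simp add: mult_ac)
    finally show "u (Inr p, Inl q) = u (Inl 0, Inr d) * zz (Inr p, Inl q)" unfolding t_def .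
  qed
  assume da: "d < a"
  then have "t = 0" using R(2) unfolding t_def by blast
  then show "u = (\<lambda>_. 0)" using eq unfolding t_def by simp
qed

lemma zz_F: assumes ad: "a \<le> d" shows "Op F zz = (\<lambda>_. 0)"
proof
  fix r
  have cb: "c \<le> b" using ad ab cd by simp
  show "Op F zz r = 0"
  proof (cases "r \<in> BL")
    case False
    have h: "\<forall>p. p \<notin> BL \<longrightarrow> Op F zz p = 0" by (rule blk_Op) (simp_all add: zz_blk)
    then show ?thesis using False by blast
  next
    case True
    then consider (LR) p q where "r = (Inl p, Inr q)" "p \<le> a" "q \<le> d" | (RL) p q where "r = (Inr p, Inl q)" "p \<le> b" "q \<le> c"
      unfolding BL_def by auto
    then show ?thesis
    proof cases
      case LR
      show ?thesis unfolding LR(1) F_LR[OF LR(2,3)] using LR(2,3) ad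
        by (cases "p = 0"; cases "q = 0") (auto simp: neg1_pow)
    next
      case RL
      show ?thesis unfolding RL(1) F_RL[OF RL(2,3)] using RL(2,3) cb
        by (cases "p = 0"; cases "q = 0") (auto simp: neg1_pow)
    qed
  qed
qed

lemma zz_X0: "Op (X 0) zz = (\<lambda>_. 0)"
proof
  fix r
  show "Op (X 0) zz r = 0"
  proof (cases "\<exists>x y. r = (Inl x, Inl y)")
    case False then show ?thesis using X_blk[OF zz_blk] by blast
  next
    case True
    then obtain x y where r: "r = (Inl x, Inl y)" by blast
    show ?thesis
    proof (cases "x \<le> a \<and> y \<le> c")
      case True
      have "Op (X 0) zz (Inl x, Inl y) = (if x = 0 then C1 0 b 0 * zz (Inr b, Inl y) else 0) + (if y = 0 then C2 0 d 0 * zz (Inl x, Inr d) else 0)"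
        by (rule X0_form) (use True in auto)
      then show ?thesis unfolding r using rho_nz True by auto
    next
      case False then show ?thesis unfolding r by (simp add: Op_out)
    qed
  qed
qed

lemma zz_SS: assumes ad: "a \<le> d" shows "zz \<in> SS"
proof -
  have "i \<le> m \<Longrightarrow> Op (X i) zz = (\<lambda>_. 0)" for i
  proof (induction i)
    case 0 show ?case by (rule zz_X0)
  next
    case (Suc i)
    show ?case
    proof
      fix r
      have "Op F (Op (X i) zz) r - Op (X i) (Op F zz) r = (\<Sum>i'\<le>m. Vrho m F i' i * Op (X i') zz r)"
        by (rule Op_comm_X) (use Suc.prems in auto)
      also have "\<dots> = Op (X (Suc i)) zz r" using Suc.prems by (simp add: csum_VF)
      finally show "Op (X (Suc i)) zz r = 0"
        using Suc.IH Suc.prems zz_F[OF ad] by (simp add: Op_zero)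
    qed
  qed
  then show ?thesis unfolding SS_iff using zz_blk by blast
qed

lemma zz_nz: "zz \<noteq> (\<lambda>_. 0)"
proof
  assume "zz = (\<lambda>_. 0)"
  then have "zz (Inl 0, Inr d) = 0" by simp
  then show False by simp
qed

lemma zz_wt: assumes ad: "a \<le> d" shows "wvec wt (- int (d - a)) zz"
  unfolding wvec_def
proof (intro allI impI)
  fix r assume nz: "zz r \<noteq> 0"
  obtain r1 r2 where rr: "r = (r1, r2)" by (cases r)
  show "wt r = - int (d - a)"
  proof (cases r1)
    case (Inl p)
    then obtain q where q: "r2 = Inr q" using nz rr by (cases r2) auto
    then have "p + q = d" using nz rr Inl by (auto split: if_splits)
    then show ?thesis using rr Inl q ad by (simp add: Wt_def of_nat_diff)
  next
    case (Inr p)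
    then obtain q where q: "r2 = Inl q" using nz rr by (cases r2) auto
    then have "p + q = b" using nz rr Inr by (auto split: if_splits)
    then show ?thesis using rr Inr q ad ab cd by (simp add: Wt_def of_nat_diff)
  qed
qed

lemma lw: assumes ad: "a \<le> d" shows "sl2_lw SS (Op E) (Op F) wt Ix (d - a) zz"
proof (rule sl2_lw.intro[OF SS_base], unfold_locales)
  show "zz \<in> SS" by (rule zz_SS[OF ad])
  show "zz \<noteq> (\<lambda>_. 0)" by (rule zz_nz)
  show "wvec wt (- int (d - a)) zz" by (rule zz_wt[OF ad])
  show "Op F zz = (\<lambda>_. 0)" by (rule zz_F[OF ad])
  fix u assume "u \<in> SS" "Op F u = (\<lambda>_. 0)"
  then show "\<exists>t. u = (\<lambda>r. t * zz r)" using K_cd(1) by blast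
qed

end


context conc_cd
begin

lemma pos_iso: assumes ad: "a \<le> d" shows "sl2_iso_V rho Ix SS (d - a)"
proof -
  have A: "sl2_lw SS (Op E) (Op F) wt Ix (d - a) zz" by (rule lw[OF ad])
  have B: "sl2_lw (Vsp (d - a) :: (nat \<Rightarrow> 'k) set) (VE (d - a)) (VF (d - a)) (\<lambda>r. int (d - a) - 2 * int r) {..d - a} (d - a) (zV (d - a))"
    by (rule V_lw)
  obtain \<phi> where
    add: "\<forall>u\<in>SS. \<forall>v\<in>SS. \<phi> (\<lambda>r. u r + v r) = (\<lambda>r. \<phi> u r + \<phi> v r)" and
    sc: "\<forall>t. \<forall>u\<in>SS. \<phi> (\<lambda>p. t * u p) = (\<lambda>p. t * \<phi> u p)" and
    bij: "bij_betw \<phi> SS (Vsp (d - a))" and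
    Ec: "\<forall>u\<in>SS. \<phi> (Op E u) = VE (d - a) (\<phi> u)" and
    Fc: "\<forall>u\<in>SS. \<phi> (Op F u) = VF (d - a) (\<phi> u)" and
    Hc: "\<forall>u\<in>SS. \<phi> (\<lambda>r. of_int (wt r) * u r) = (\<lambda>r. of_int (int (d - a) - 2 * int r) * \<phi> u r)"
    using sl2_iso_abs[OF A B] by (elim exE conjE) blast
  have Hc': "\<phi> (Op H u) = VH (d - a) (\<phi> u)" if u: "u \<in> SS" for u
  proof -
    have "Op H u = (\<lambda>r. of_int (wt r) * u r)" using Op_H SS_supp[OF u] by blast
    then have "\<phi> (Op H u) = (\<lambda>r. of_int (int (d - a) - 2 * int r) * \<phi> u r)" using Hc u by simp
    moreover have "\<phi> u \<in> Vsp (d - a)" using bij u unfolding bij_betw_def by blast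
    ultimately show ?thesis unfolding VH_eq Vsp_def by (auto intro!: ext)
  qed
  show ?thesis unfolding sl2_iso_V_def
  proof (intro conjI)
    show "\<forall>g\<in>{E, F, H}. \<forall>u\<in>SS. Op g u \<in> SS" using SS_stab by simp
    show "\<exists>\<phi>. (\<forall>u\<in>SS. \<forall>v\<in>SS. \<phi> (u + v) = \<phi> u + \<phi> v) \<and>
        (\<forall>t. \<forall>u\<in>SS. \<phi> (\<lambda>p. t * u p) = (\<lambda>p. t * \<phi> u p)) \<and>
        bij_betw \<phi> SS (Vsp (d - a)) \<and>
        (\<forall>g\<in>{E, F, H}. \<forall>u\<in>SS. \<phi> (Op g u) = act (Vrho (d - a)) {..d - a} g (\<phi> u))"
    proof (intro exI conjI)
      show "\<forall>u\<in>SS. \<forall>v\<in>SS. \<phi> (u + v) = \<phi> u + \<phi> v" using add by (simp add: plus_fun_def)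
      show "\<forall>t. \<forall>u\<in>SS. \<phi> (\<lambda>p. t * u p) = (\<lambda>p. t * \<phi> u p)" by (rule sc)
      show "bij_betw \<phi> SS (Vsp (d - a))" by (rule bij)
      show "\<forall>g\<in>{E, F, H}. \<forall>u\<in>SS. \<phi> (Op g u) = act (Vrho (d - a)) {..d - a} g (\<phi> u)"
      proof (intro ballI)
        fix g u assume g: "g \<in> {E, F, H}" and u: "u \<in> SS"
        from g consider "g = E" | "g = F" | "g = H" by blast
        then show "\<phi> (Op g u) = act (Vrho (d - a)) {..d - a} g (\<phi> u)"
        proof cases
          case 1 then show ?thesis using Ec u by simp
        next
          case 2 then show ?thesis using Fc u by simp
        next
          case 3 then show ?thesis using Hc'[OF u] by simp
        qed
      qed
    qed
  qed
qed

lemma neg_zero: assumes da: "d < a" shows "SS = {0}"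
proof -
  interpret B: sl2_base SS "Op E" "Op F" wt Ix by (rule SS_base)
  have k: "\<forall>u\<in>SS. Op F u = (\<lambda>_. 0) \<longrightarrow> u = (\<lambda>_. 0)"
  proof (intro ballI impI)
    fix u assume "u \<in> SS" "Op F u = (\<lambda>_. 0)"
    then show "u = (\<lambda>_. 0)" by (rule K_cd(2)[OF _ _ da])
  qed
  have all0: "u = 0" if "u \<in> SS" for u
    using B.zero_thm[OF k that] by (simp add: zero_fun_def)
  have "0 \<in> SS" using B.S0 by (simp add: zero_fun_def)
  then show ?thesis using all0 by blast
qed

end


lemma zero_from_K:
  assumes c: "conc m a b c d C1 C2"
    and K: "\<And>u. u \<in> S1 m a b C1 c d C2 \<Longrightarrow> act (trho (Erho a b C1) (Erho c d C2)) (EI a b \<times> EI c d) F u = (\<lambda>_. 0) \<Longrightarrow> u = (\<lambda>_. 0)"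
  shows "S1 m a b C1 c d C2 = {0}"
proof -
  interpret conc m a b c d C1 C2 by (rule c)
  interpret B: sl2_base SS "Op E" "Op F" wt Ix by (rule SS_base)
  have k: "\<forall>u\<in>SS. Op F u = (\<lambda>_. 0) \<longrightarrow> u = (\<lambda>_. 0)"
  proof (intro ballI impI)
    fix u assume "u \<in> SS" "Op F u = (\<lambda>_. 0)"
    then show "u = (\<lambda>_. 0)" by (rule K)
  qed
  have all0: "u = 0" if "u \<in> SS" for u
    using B.zero_thm[OF k that] by (simp add: zero_fun_def)
  have "0 \<in> SS" using B.S0 by (simp add: zero_fun_def)
  then show ?thesis using all0 by blast
qed

lemma N2:
  fixes C1 C2 :: "nat \<Rightarrow> nat \<Rightarrow> nat \<Rightarrow> 'k::field_char_0"
  assumes ab: "a + b = m" and a0: "a \<noteq> 0" and c0: "c \<noteq> 0"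
    and e1: "equivariant m b a C1" and n1: "nonzero_map m b a C1"
    and e2: "equivariant m (c + m) c C2" and n2: "nonzero_map m (c + m) c C2"
  shows "S1 m a b C1 c (c + m) C2 = {0}"
proof -
  interpret conc m a b c "c + m" C1 C2 by unfold_locales (rule e1, rule e2)
  define \<gamma> where "\<gamma> k = C2 0 (k + m) k" for k
  have rho_nz: "C1 0 b 0 \<noteq> 0" by (rule top_C0(1)[OF e1 n1 ab])
  have gnz: "\<gamma> k \<noteq> 0" if kc: "k \<le> c" for k
  proof (rule chain_lemma[of c "\<lambda>k. of_nat ((Suc k + m) * (c - k))" \<gamma> "\<lambda>k. of_nat (Suc k * (c - k))"])
    fix k assume k: "k < c"
    have h: "(if 1 \<le> Suc k + m then of_nat ((Suc k + m) * (c + m - (Suc k + m) + 1)) * C2 0 (Suc k + m - 1) k else 0)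
        = (if k < c then of_nat (Suc k * (c - k)) * C2 0 (Suc k + m) (Suc k) else 0)"
      by (rule equiv_E0[OF e2]) (use k in auto)
    have c1: "1 \<le> Suc k + m" by simp
    have n0: "c + m - (Suc k + m) + 1 = c - k" using k by simp
    have n1: "(Suc k + m) * (c + m - (Suc k + m) + 1) = (Suc k + m) * (c - k)" by (simp only: n0)
    have n2: "Suc k + m - 1 = k + m" by simp
    from h show "of_nat ((Suc k + m) * (c - k)) * \<gamma> k = of_nat (Suc k * (c - k)) * \<gamma> (Suc k)"
      unfolding \<gamma>_def by (simp only: c1 k if_True n1 n2)
  next
    fix k assume "k < c"
    then have "(Suc k + m) * (c - k) \<noteq> 0" by simp
    then show "(of_nat ((Suc k + m) * (c - k)) :: 'k) \<noteq> 0" by (metis of_nat_eq_0_iff)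
  next
    fix k assume "k < c"
    then have "Suc k * (c - k) \<noteq> 0" by simp
    then show "(of_nat (Suc k * (c - k)) :: 'k) \<noteq> 0" by (metis of_nat_eq_0_iff)
  next
    obtain j k where jk: "j \<le> c + m" "k \<le> c" "C2 0 j k \<noteq> 0" using C0_nz[OF e2 n2] by blast
    have "j = k + m" using C0_wt[OF e2 jk] by linarith
    then show "\<exists>k\<le>c. \<gamma> k \<noteq> 0" using jk unfolding \<gamma>_def by blast
  next
    show "k \<le> c" by (rule kc)
  qed
  have sumC2: "(\<Sum>j\<le>c + m. C2 0 j q * f j) = C2 0 (q + m) q * f (q + m)" if q: "q \<le> c" for q f
  proof -
    have "(\<Sum>j\<le>c + m. C2 0 j q * f j) = (if q + m \<le> c + m then C2 0 (q + m) q * f (q + m) else 0)"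
      by (rule sum_C0[OF e2 q]) linarith
    then show ?thesis using q by simp
  qed
  have X0f: "Op (X 0) u (Inl p, Inl q) = (if p = 0 then C1 0 b 0 * u (Inr b, Inl q) else 0) + \<gamma> q * u (Inl p, Inr (q + m))"
    if "p \<le> a" "q \<le> c" for p q u
    unfolding X0_LL[OF that] using top_C0(2)[OF e1 n1 ab] sumC2 that unfolding \<gamma>_def by simp
  have K: "u = (\<lambda>_. 0)" if u: "u \<in> SS" and Fu: "Op F u = (\<lambda>_. 0)" for u
  proof -
    note E = SS_F_eqs[OF u Fu]
    have ublk: "\<forall>p. p \<notin> BL \<longrightarrow> u p = 0" using u SS_iff by blast
    have E1: "\<forall>p q. p \<le> a \<longrightarrow> q \<le> c + m \<longrightarrow> (if 1 \<le> p then u (Inl (p - 1), Inr q) else 0) + (if 1 \<le> q then u (Inl p, Inr (q - 1)) else 0) = 0"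
      using E(1) by blast
    have E2: "\<forall>p q. p \<le> b \<longrightarrow> q \<le> c \<longrightarrow> (if 1 \<le> p then u (Inr (p - 1), Inl q) else 0) + (if 1 \<le> q then u (Inr p, Inl (q - 1)) else 0) = 0"
      using E(2) by blast
    have T1: "\<forall>p. 1 \<le> p \<longrightarrow> p \<le> a \<longrightarrow> u (Inl p, Inr (c + m)) = 0"
    proof (intro allI impI)
      fix p assume p: "1 \<le> p" "p \<le> a"
      have "Op (X 0) u (Inl p, Inl c) = 0" using E(3)[of p c] p by simp
      then have "\<gamma> c * u (Inl p, Inr (c + m)) = 0" using X0f[of p c u] p by simp
      then show "u (Inl p, Inr (c + m)) = 0" using gnz[of c] by simp
    qed
    note R = row_lemma_H[of a "c + m" "\<lambda>p q. u (Inl p, Inr q)", OF E1 T1]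
    define t where "t = u (Inl 0, Inr (c + m))"
    have "Op (X 0) u (Inl 1, Inl (c - 1)) = 0" using E(3)[of 1 "c - 1"] a0 by simp
    then have "\<gamma> (c - 1) * u (Inl 1, Inr (c - 1 + m)) = 0" using X0f[of 1 "c - 1" u] a0 by simp
    then have u1: "u (Inl 1, Inr (c - 1 + m)) = 0" using gnz[of "c - 1"] by simp
    have "u (Inl 1, Inr (c - 1 + m)) = (if 1 + (c - 1 + m) = c + m then (-1) ^ 1 * t else 0)"
      unfolding t_def by (rule R(1)[rule_format]) (use a0 in auto)
    then have t0: "t = 0" using u1 c0 by simp
    have U1: "u (Inl p, Inr q) = 0" if "p \<le> a" "q \<le> c + m" for p q
    proof -
      have "u (Inl p, Inr q) = (if p + q = c + m then (-1) ^ p * t else 0)"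
        unfolding t_def by (rule R(1)[rule_format, OF that])
      then show ?thesis using t0 by simp
    qed
    have S2: "\<forall>q. 1 \<le> q \<longrightarrow> q \<le> c \<longrightarrow> u (Inr b, Inl q) = 0"
    proof (intro allI impI)
      fix q assume q: "1 \<le> q" "q \<le> c"
      have "Op (X 0) u (Inl 0, Inl q) = 0" using E(3)[of 0 q] q by simp
      then have "C1 0 b 0 * u (Inr b, Inl q) = 0" using X0f[of 0 q u] q U1[of 0 "q + m"] by simp
      then show "u (Inr b, Inl q) = 0" using rho_nz by simp
    qed
    have s0: "u (Inr b, Inl 0) = 0"
    proof -
      have "Op (X 0) u (Inl 0, Inl 0) = 0" using E(3)[of 0 0] by simp
      then have "C1 0 b 0 * u (Inr b, Inl 0) = 0" using X0f[of 0 0 u] U1[of 0 m] by simp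
      then show ?thesis using rho_nz by simp
    qed
    note Cc = col_lemma_H[of b c "\<lambda>p q. u (Inr p, Inl q)", OF E2 S2]
    show ?thesis
    proof (rule fun_eq_blocks[OF ublk])
      show "\<forall>p. p \<notin> BL \<longrightarrow> (0::'k) = 0" by simp
    next
      fix p q assume "p \<le> a" "q \<le> c + m" then show "u (Inl p, Inr q) = 0" by (rule U1)
    next
      fix p q assume pq: "p \<le> b" "q \<le> c"
      have "u (Inr p, Inl q) = (if p + q = b then (-1) ^ q * u (Inr b, Inl 0) else 0)"
        by (rule Cc(1)[rule_format, OF pq])
      then show "u (Inr p, Inl q) = 0" using s0 by simp
    qed
  qed
  show ?thesis by (rule zero_from_K) (unfold_locales, (rule e1), (rule e2), (rule K))
qed

lemma N3:
  fixes C1 C2 :: "nat \<Rightarrow> nat \<Rightarrow> nat \<Rightarrow> 'k::field_char_0"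
  assumes ab: "a + b = m" and a0: "a \<noteq> 0"
    and e1: "equivariant m b a C1" and n1: "nonzero_map m b a C1"
    and e2: "equivariant m d (d + m) C2" and n2: "nonzero_map m d (d + m) C2"
  shows "S1 m a b C1 (d + m) d C2 = {0}"
proof -
  interpret conc m a b "d + m" d C1 C2 by unfold_locales (rule e1, rule e2)
  define \<gamma> where "\<gamma> k = C2 0 k k" for k
  have rho_nz: "C1 0 b 0 \<noteq> 0" by (rule top_C0(1)[OF e1 n1 ab])
  have gnz: "\<gamma> k \<noteq> 0" if kd: "k \<le> d" for k
  proof (rule chain_lemma[of d "\<lambda>k. of_nat (Suc k * (d - k))" \<gamma> "\<lambda>k. of_nat (Suc k * (d + m - k))"])
    fix k assume k: "k < d"
    have h: "(if 1 \<le> Suc k then of_nat (Suc k * (d - Suc k + 1)) * C2 0 (Suc k - 1) k else 0)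
        = (if k < d + m then of_nat (Suc k * (d + m - k)) * C2 0 (Suc k) (Suc k) else 0)"
      by (rule equiv_E0[OF e2]) (use k in auto)
    have c1: "1 \<le> Suc k" by simp
    have c2: "k < d + m" using k by simp
    have n0: "d - Suc k + 1 = d - k" using k by simp
    have n1: "Suc k * (d - Suc k + 1) = Suc k * (d - k)" by (simp only: n0)
    have n2: "Suc k - 1 = k" by simp
    from h show "of_nat (Suc k * (d - k)) * \<gamma> k = of_nat (Suc k * (d + m - k)) * \<gamma> (Suc k)"
      unfolding \<gamma>_def by (simp only: c1 c2 if_True n1 n2)
  next
    fix k assume "k < d"
    then have "Suc k * (d - k) \<noteq> 0" by simp
    then show "(of_nat (Suc k * (d - k)) :: 'k) \<noteq> 0" by (metis of_nat_eq_0_iff)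
  next
    fix k assume "k < d"
    then have "Suc k * (d + m - k) \<noteq> 0" by simp
    then show "(of_nat (Suc k * (d + m - k)) :: 'k) \<noteq> 0" by (metis of_nat_eq_0_iff)
  next
    obtain j k where jk: "j \<le> d" "k \<le> d + m" "C2 0 j k \<noteq> 0" using C0_nz[OF e2 n2] by blast
    have "j = k" using C0_wt[OF e2 jk] by linarith
    then show "\<exists>k\<le>d. \<gamma> k \<noteq> 0" using jk unfolding \<gamma>_def by blast
  next
    show "k \<le> d" by (rule kd)
  qed
  have sumC2: "(\<Sum>j\<le>d. C2 0 j q * f j) = (if q \<le> d then C2 0 q q * f q else 0)" if q: "q \<le> d + m" for q f
    by (rule sum_C0[OF e2 q]) linarith
  have X0f: "Op (X 0) u (Inl p, Inl q) = (if p = 0 then C1 0 b 0 * u (Inr b, Inl q) else 0) + (if q \<le> d then \<gamma> q * u (Inl p, Inr q) else 0)"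
    if "p \<le> a" "q \<le> d + m" for p q u
    unfolding X0_LL[OF that] using top_C0(2)[OF e1 n1 ab] sumC2 that unfolding \<gamma>_def by simp
  have K: "u = (\<lambda>_. 0)" if u: "u \<in> SS" and Fu: "Op F u = (\<lambda>_. 0)" for u
  proof -
    note E = SS_F_eqs[OF u Fu]
    have ublk: "\<forall>p. p \<notin> BL \<longrightarrow> u p = 0" using u SS_iff by blast
    have E1: "\<forall>p q. p \<le> a \<longrightarrow> q \<le> d \<longrightarrow> (if 1 \<le> p then u (Inl (p - 1), Inr q) else 0) + (if 1 \<le> q then u (Inl p, Inr (q - 1)) else 0) = 0"
      using E(1) by blast
    have E2: "\<forall>p q. p \<le> b \<longrightarrow> q \<le> d + m \<longrightarrow> (if 1 \<le> p then u (Inr (p - 1), Inl q) else 0) + (if 1 \<le> q then u (Inr p, Inl (q - 1)) else 0) = 0"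
      using E(2) by blast
    have Z1: "u (Inl p, Inr q) = 0" if p: "1 \<le> p" "p \<le> a" and q: "q \<le> d" for p q
    proof -
      have "Op (X 0) u (Inl p, Inl q) = 0" using E(3)[of p q] p q by simp
      then have "\<gamma> q * u (Inl p, Inr q) = 0" using X0f[of p q u] p q by simp
      then show ?thesis using gnz[OF q] by simp
    qed
    have T1: "\<forall>p. 1 \<le> p \<longrightarrow> p \<le> a \<longrightarrow> u (Inl p, Inr d) = 0" using Z1 by blast
    note R = row_lemma_H[of a d "\<lambda>p q. u (Inl p, Inr q)", OF E1 T1]
    define t where "t = u (Inl 0, Inr d)"
    have t0: "t = 0"
    proof (cases "d = 0")
      case True
      then show ?thesis using R(2) a0 unfolding t_def by simp
    next
      case False
      have "u (Inl 1, Inr (d - 1)) = (if 1 + (d - 1) = d then (-1) ^ 1 * t else 0)"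
        unfolding t_def by (rule R(1)[rule_format]) (use a0 in auto)
      moreover have "u (Inl 1, Inr (d - 1)) = 0" using Z1[of 1 "d - 1"] a0 by simp
      ultimately show ?thesis using False by simp
    qed
    have U1: "u (Inl p, Inr q) = 0" if "p \<le> a" "q \<le> d" for p q
    proof -
      have "u (Inl p, Inr q) = (if p + q = d then (-1) ^ p * t else 0)"
        unfolding t_def by (rule R(1)[rule_format, OF that])
      then show ?thesis using t0 by simp
    qed
    have S0: "u (Inr b, Inl q) = 0" if q: "q \<le> d + m" for q
    proof -
      have "Op (X 0) u (Inl 0, Inl q) = 0" using E(3)[of 0 q] q by simp
      moreover have "(if q \<le> d then \<gamma> q * u (Inl 0, Inr q) else 0) = 0" using U1[of 0 q] by simp
      ultimately have "C1 0 b 0 * u (Inr b, Inl q) = 0" using X0f[of 0 q u] q by simp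
      then show ?thesis using rho_nz by simp
    qed
    have S2: "\<forall>q. 1 \<le> q \<longrightarrow> q \<le> d + m \<longrightarrow> u (Inr b, Inl q) = 0" using S0 by blast
    note Cc = col_lemma_H[of b "d + m" "\<lambda>p q. u (Inr p, Inl q)", OF E2 S2]
    show ?thesis
    proof (rule fun_eq_blocks[OF ublk])
      show "\<forall>p. p \<notin> BL \<longrightarrow> (0::'k) = 0" by simp
    next
      fix p q assume "p \<le> a" "q \<le> d" then show "u (Inl p, Inr q) = 0" by (rule U1)
    next
      fix p q assume pq: "p \<le> b" "q \<le> d + m"
      have "u (Inr p, Inl q) = (if p + q = b then (-1) ^ q * u (Inr b, Inl 0) else 0)"
        by (rule Cc(1)[rule_format, OF pq])
      then show "u (Inr p, Inl q) = 0" using S0[of 0] by simp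
    qed
  qed
  show ?thesis by (rule zero_from_K) (unfold_locales, (rule e1), (rule e2), (rule K))
qed


theorem theorem4p3:
  fixes n m a b :: nat and C1 :: "nat \<Rightarrow> nat \<Rightarrow> nat \<Rightarrow> 'k::field_char_0"
  assumes "n \<ge> 1" and "m = 2 * n - 1"
    and "a + b = m" and "a \<noteq> 0" and "b \<noteq> 0"
    and "equivariant m b a C1" and "nonzero_map m b a C1"
  shows
    "(\<forall>c d (C2 :: nat \<Rightarrow> nat \<Rightarrow> nat \<Rightarrow> 'k).
        c + d = m \<and> 0 < a \<and> a \<le> c \<and> c < m
        \<and> equivariant m d c C2 \<and> nonzero_map m d c C2 \<longrightarrow>
        (if int d - int a = int b - int c \<and> int d - int a \<ge> 0
         then sl2_iso_V (trho (Erho a b C1) (Erho c d C2)) (EI a b \<times> EI c d)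
                (S1 m a b C1 c d C2) (d - a)
         else S1 m a b C1 c d C2 = {0}))
   \<and> (\<forall>c (C2 :: nat \<Rightarrow> nat \<Rightarrow> nat \<Rightarrow> 'k).
        equivariant m (c + m) c C2 \<and> nonzero_map m (c + m) c C2 \<longrightarrow>
        (if c = 0
         then sl2_iso_V (trho (Erho a b C1) (Erho c (c + m) C2)) (EI a b \<times> EI c (c + m))
                (S1 m a b C1 c (c + m) C2) b
         else S1 m a b C1 c (c + m) C2 = {0}))
   \<and> (\<forall>d (C2 :: nat \<Rightarrow> nat \<Rightarrow> nat \<Rightarrow> 'k).
        equivariant m d (d + m) C2 \<and> nonzero_map m d (d + m) C2 \<longrightarrow>
        S1 m a b C1 (d + m) d C2 = {0})"
proof (intro conjI allI impI)
  note ab = assms(3) and a0 = assms(4) and e1 = assms(6) and n1 = assms(7)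
  fix c d and C2 :: "nat \<Rightarrow> nat \<Rightarrow> nat \<Rightarrow> 'k"
  assume h: "c + d = m \<and> 0 < a \<and> a \<le> c \<and> c < m \<and> equivariant m d c C2 \<and> nonzero_map m d c C2"
  have cc: "conc_cd m a b c d C1 C2"
    by (intro conc_cd.intro conc.intro conc_cd_axioms.intro) (use h e1 n1 ab in auto)
  show "if int d - int a = int b - int c \<and> int d - int a \<ge> 0
         then sl2_iso_V (trho (Erho a b C1) (Erho c d C2)) (EI a b \<times> EI c d)
                (S1 m a b C1 c d C2) (d - a)
         else S1 m a b C1 c d C2 = {0}"
  proof (cases "a \<le> d")
    case True
    then have "int d - int a = int b - int c \<and> int d - int a \<ge> 0" using h ab by auto
    then show ?thesis using conc_cd.pos_iso[OF cc True] by simp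
  next
    case False
    then have "\<not> (int d - int a = int b - int c \<and> int d - int a \<ge> 0)" by auto
    then show ?thesis using conc_cd.neg_zero[OF cc] False by simp
  qed
next
  note ab = assms(3) and a0 = assms(4) and e1 = assms(6) and n1 = assms(7)
  fix c and C2 :: "nat \<Rightarrow> nat \<Rightarrow> nat \<Rightarrow> 'k"
  assume h: "equivariant m (c + m) c C2 \<and> nonzero_map m (c + m) c C2"
  show "if c = 0
         then sl2_iso_V (trho (Erho a b C1) (Erho c (c + m) C2)) (EI a b \<times> EI c (c + m))
                (S1 m a b C1 c (c + m) C2) b
         else S1 m a b C1 c (c + m) C2 = {0}"
  proof (cases "c = 0")
    case True
    have cc: "conc_cd m a b c (c + m) C1 C2"
      by (intro conc_cd.intro conc.intro conc_cd_axioms.intro) (use h e1 n1 ab True in auto)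
    have ad: "a \<le> c + m" using ab by simp
    have "c + m - a = b" using ab True by simp
    then show ?thesis using conc_cd.pos_iso[OF cc ad] True by simp
  next
    case False
    then show ?thesis using N2[OF ab a0 False e1 n1] h by simp
  qed
next
  note ab = assms(3) and a0 = assms(4) and e1 = assms(6) and n1 = assms(7)
  fix d and C2 :: "nat \<Rightarrow> nat \<Rightarrow> nat \<Rightarrow> 'k"
  assume h: "equivariant m d (d + m) C2 \<and> nonzero_map m d (d + m) C2"
  show "S1 m a b C1 (d + m) d C2 = {0}" using N3[OF ab a0 e1 n1] h by simp
qed

end
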